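(* Let $n\ge2$, let $A$ be a Hermitian matrix of order $n$ and $\mathcal{O}\in\mathcal{C}_{sg}^{(n)}$. Suppose that $\mathcal{O}\stackrel{\mathsf{p}}{\sim}\mathcal{O}'\stackrel{\mathsf{w}}{\sim}\mathcal{O}''$ or $\mathcal{O}\stackrel{\mathsf{w}}{\sim}\mathcal{O}'\stackrel{\mathsf{p}}{\sim}\mathcal{O}''$ with $\mathcal{O}''\in\mathcal{C}_{sp}^{(n)}$, and that the weak equivalence relation is given by a chain in canonical form containing $d$ shift equivalences. Let $A'$ be obtained from $A$ by applying $d+1$ cycles of the cyclic complex Jacobi method defined by the strategy $I_{\mathcal{O}}$. If all rotation angles satisfy $\phi_k\in[-\pi/4,\pi/4]$, $k\ge0$, then there is a constant $\gamma_n$ depending only on $n$ such that $S^2(A')\le\gamma_nS^2(A)$, $0\le\gamma_n<1$.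
   Context: $\imath=\sqrt{-1}$. For $1\le i<j\le n$ and real $\phi,\alpha$, $R(i,j,\phi,\alpha)$ is the $n\times n$ matrix equal to $I_n$ except for entries $(i,i)=(j,j)=\cos\phi$, $(i,j)=-e^{\imath\alpha}\sin\phi$, $(j,i)=e^{-\imath\alpha}\sin\phi$. $S(X)=\|X-\mathrm{diag}(X)\|_F$. The complex Jacobi method on Hermitian $A$ is $A^{(0)}=A$, $A^{(k+1)}=U_k^*A^{(k)}U_k$, $U_k=R(i_k,j_k,\phi_k,\alpha_k)$, with angles chosen so that entry $(i_k,j_k)$ (hence $(j_k,i_k)$) of $A^{(k+1)}$ is zero. Let $\mathcal{P}_n=\{(r,s):1\le r<s\le n\}$, $N=n(n-1)/2$; an ordering is a sequence listing each element of $\mathcal{P}_n$ exactly once. For an ordering $(i_0,j_0),\dots,(i_{N-1},j_{N-1})$, the cyclic strategy $I_{\mathcal{O}}$ uses $(i_{k\bmod N},j_{k\bmod N})$ as $k$-th pivot pair; a cycle is $N$ consecutive steps. Relations on orderings: an admissible transposition swaps two adjacent pairs with disjoint index sets; $\mathcal{O}\sim\mathcal{O}'$ if one is obtained from the other by finitely many admissible transpositions; $\mathcal{O}\stackrel{\mathsf{s}}{\sim}\mathcal{O}'$ if $\mathcal{O}=[\mathcal{O}_1,\mathcal{O}_2]$, $\mathcal{O}'=[\mathcal{O}_2,\mathcal{O}_1]$ (concatenation); $\mathcal{O}\stackrel{\mathsf{w}}{\sim}\mathcal{O}'$ if there is a chain $\mathcal{O}=\mathcal{O}_0,\dots,\mathcal{O}_r=\mathcal{O}'$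 of orderings whose adjacent terms are $\sim$ or $\stackrel{\mathsf{s}}{\sim}$; the chain is in canonical form if these relations alternate between $\sim$ and $\stackrel{\mathsf{s}}{\sim}$. $\mathcal{O}\stackrel{\mathsf{p}}{\sim}\mathcal{O}'$ if for some permutation $\mathsf{q}$ of $\{1,\dots,n\}$, $\mathcal{O}'$ arises by replacing each pair $(i_k,j_k)$ by the pair with entries $\mathsf{q}(i_k),\mathsf{q}(j_k)$ in increasing order. $\mathcal{C}_c^{(n)}$: orderings $(1,2),(\tau_3(1),3),(\tau_3(2),3),\dots,(\tau_n(1),n),\dots,(\tau_n(n-1),n)$, $\tau_j$ a permutation of $\{1,\dots,j-1\}$; $\mathcal{C}_r^{(n)}$: orderings $(n-1,n),(n-2,\tau_{n-2}(n-1)),(n-2,\tau_{n-2}(n)),\dots,(1,\tau_1(2)),\dots,(1,\tau_1(n))$, $\tau_i$ a permutation of $\{i+1,\dots,n\}$; $\overleftarrow{\mathcal{C}}_c^{(n)},\overleftarrow{\mathcal{C}}_r^{(n)}$ the sets of orderings whose reversed sequences lie in $\mathcal{C}_c^{(n)}$, $\mathcal{C}_r^{(n)}$; $\mathcal{C}_{sp}^{(n)}=\mathcal{C}_c^{(n)}\cup\overleftarrow{\mathcal{C}}_c^{(n)}\cup\mathcal{C}_r^{(n)}\cup\overleftarrow{\mathcal{C}}_r^{(n)}$. $\mathcal{C}_{sg}^{(n)}$ is the set of orderings $\mathcal{O}$ with $\mathcal{O}\stackrel{\mathsf{p}}{\sim}\mathcal{O}'\stackrel{\mathsf{w}}{\sim}\mathcal{O}''$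 or $\mathcal{O}\stackrel{\mathsf{w}}{\sim}\mathcal{O}'\stackrel{\mathsf{p}}{\sim}\mathcal{O}''$ for some ordering $\mathcal{O}'$ and some $\mathcal{O}''\in\mathcal{C}_{sp}^{(n)}$, weak equivalence given in canonical form. *)

theory Defs
  imports Complex_Main
begin

text \<open>Matrices of order n are represented as functions nat => nat => complex,
  only the entries with indices in {1..n} being relevant (1-based, as in the paper).\<close>

type_synonym cmatrix = "nat \<Rightarrow> nat \<Rightarrow> complex"

definition hermitian :: "nat \<Rightarrow> cmatrix \<Rightarrow> bool" where
  "hermitian n A \<longleftrightarrow> (\<forall>r\<in>{1..n}. \<forall>s\<in>{1..n}. A s r = cnj (A r s))"

definition mmul :: "nat \<Rightarrow> cmatrix \<Rightarrow> cmatrix \<Rightarrow> cmatrix" where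
  "mmul n X Y = (\<lambda>r s. \<Sum>k=1..n. X r k * Y k s)"

definition adjoint :: "cmatrix \<Rightarrow> cmatrix" where
  "adjoint X = (\<lambda>r s. cnj (X s r))"

definition rot :: "nat \<Rightarrow> nat \<Rightarrow> real \<Rightarrow> real \<Rightarrow> cmatrix" where
  "rot i j \<phi> \<alpha> = (\<lambda>r s.
     if r = s then (if r = i \<or> r = j then complex_of_real (cos \<phi>) else 1)
     else if r = i \<and> s = j then - exp (\<i> * complex_of_real \<alpha>) * complex_of_real (sin \<phi>)
     else if r = j \<and> s = i then exp (- \<i> * complex_of_real \<alpha>) * complex_of_real (sin \<phi>)
     else 0)"

definition offS :: "nat \<Rightarrow> cmatrix \<Rightarrow> real" where
  "offS n X = sqrt (\<Sum>r\<in>{1..n}. \<Sum>s\<in>{1..n}. if r \<noteq> s then (cmod (X r s))\<^sup>2 else 0)"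

definition pairs :: "nat \<Rightarrow> (nat \<times> nat) set" where
  "pairs n = {(r, s). 1 \<le> r \<and> r < s \<and> s \<le> n}"

definition is_ordering :: "nat \<Rightarrow> (nat \<times> nat) list \<Rightarrow> bool" where
  "is_ordering n Ord \<longleftrightarrow> distinct Ord \<and> set Ord = pairs n"

definition adm_transp :: "(nat \<times> nat) list \<Rightarrow> (nat \<times> nat) list \<Rightarrow> bool" where
  "adm_transp Ord Ord' \<longleftrightarrow> (\<exists>k. Suc k < length Ord \<and>
      {fst (Ord ! k), snd (Ord ! k)} \<inter> {fst (Ord ! Suc k), snd (Ord ! Suc k)} = {} \<and>
      Ord' = Ord[k := Ord ! Suc k, Suc k := Ord ! k])"

definition ord_equiv :: "(nat \<times> nat) list \<Rightarrow> (nat \<times> nat) list \<Rightarrow> bool" where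
  "ord_equiv Ord Ord' \<longleftrightarrow> adm_transp\<^sup>*\<^sup>* Ord Ord'"

definition shift_equiv :: "(nat \<times> nat) list \<Rightarrow> (nat \<times> nat) list \<Rightarrow> bool" where
  "shift_equiv Ord Ord' \<longleftrightarrow> (\<exists>O1 O2. Ord = O1 @ O2 \<and> Ord' = O2 @ O1)"

text \<open>A chain Ord = cs!0, ..., cs!r = Ord' witnessing weak equivalence in canonical form
  (relations alternate between ord_equiv and shift_equiv; b says whether the first
  relation is ord_equiv), containing exactly d shift equivalences.\<close>
definition canon_chain :: "nat \<Rightarrow> (nat \<times> nat) list \<Rightarrow> (nat \<times> nat) list \<Rightarrow> bool" where
  "canon_chain d Ord Ord' \<longleftrightarrow> (\<exists>cs b. cs \<noteq> [] \<and> hd cs = Ord \<and> last cs = Ord' \<and>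
      (\<forall>k. Suc k < length cs \<longrightarrow>
          (if (even k \<longleftrightarrow> b) then ord_equiv (cs ! k) (cs ! Suc k)
           else shift_equiv (cs ! k) (cs ! Suc k))) \<and>
      d = card {k. Suc k < length cs \<and> \<not> (even k \<longleftrightarrow> b)})"

definition perm_equiv :: "nat \<Rightarrow> (nat \<times> nat) list \<Rightarrow> (nat \<times> nat) list \<Rightarrow> bool" where
  "perm_equiv n Ord Ord' \<longleftrightarrow> (\<exists>q. bij_betw q {1..n} {1..n} \<and>
      Ord' = map (\<lambda>(i, j). (min (q i) (q j), max (q i) (q j))) Ord)"

definition C_c :: "nat \<Rightarrow> (nat \<times> nat) list set" where
  "C_c n = {Ord. \<exists>L. (\<forall>j\<in>{2..n}. distinct (L j) \<and> set (L j) = {1..<j}) \<and>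
      Ord = concat (map (\<lambda>j. map (\<lambda>i. (i, j)) (L j)) [2..<Suc n])}"

definition C_r :: "nat \<Rightarrow> (nat \<times> nat) list set" where
  "C_r n = {Ord. \<exists>L. (\<forall>i\<in>{1..<n}. distinct (L i) \<and> set (L i) = {i<..n}) \<and>
      Ord = concat (map (\<lambda>i. map (\<lambda>j. (i, j)) (L i)) (rev [1..<n]))}"

definition C_sp :: "nat \<Rightarrow> (nat \<times> nat) list set" where
  "C_sp n = C_c n \<union> rev ` C_c n \<union> C_r n \<union> rev ` C_r n"

definition jacobi_run :: "nat \<Rightarrow> (nat \<times> nat) list \<Rightarrow> cmatrix \<Rightarrow> (nat \<Rightarrow> cmatrix)
    \<Rightarrow> (nat \<Rightarrow> real) \<Rightarrow> (nat \<Rightarrow> real) \<Rightarrow> bool" where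
  "jacobi_run n Ord A Aseq \<phi> \<alpha> \<longleftrightarrow> Aseq 0 = A \<and>
     (\<forall>k. let i = fst (Ord ! (k mod length Ord)); j = snd (Ord ! (k mod length Ord));
              U = rot i j (\<phi> k) (\<alpha> k) in
          Aseq (Suc k) = mmul n (adjoint U) (mmul n (Aseq k) U) \<and>
          Aseq (Suc k) i j = 0)"

end

theory Submission
  imports Defs "HOL-Analysis.Analysis"
begin

definition rmul :: "nat \<Rightarrow> nat \<Rightarrow> complex \<Rightarrow> complex \<Rightarrow> complex \<Rightarrow> cmatrix \<Rightarrow> cmatrix" where
  "rmul i j c s w X = (\<lambda>r t. if t = i then c * X r i + cnj w * s * X r j
      else if t = j then - (w * s * X r i) + c * X r j else X r t)"

definition lmul :: "nat \<Rightarrow> nat \<Rightarrow> complex \<Rightarrow> complex \<Rightarrow> complex \<Rightarrow> cmatrix \<Rightarrow> cmatrix" where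
  "lmul i j c s w Z = (\<lambda>r t. if r = i then c * Z i t + w * s * Z j t
      else if r = j then - (cnj w * s * Z i t) + c * Z j t else Z r t)"

definition conjr :: "nat \<Rightarrow> nat \<Rightarrow> real \<Rightarrow> complex \<Rightarrow> cmatrix \<Rightarrow> cmatrix" where
  "conjr i j \<phi> w X = lmul i j (of_real (cos \<phi>)) (of_real (sin \<phi>)) w
      (rmul i j (of_real (cos \<phi>)) (of_real (sin \<phi>)) w X)"

lemma sum_two_deltas:
  assumes "finite R" "i \<in> R" "j \<in> R" "i \<noteq> j"
  shows "(\<Sum>k\<in>R. (if k = i then a else 0) + (if k = j then b else 0)) = a + (b::complex)"
  using assms by (simp add: sum.distrib)

lemma rot_col:
  assumes "i \<noteq> j"
  shows "rot i j \<phi> \<alpha> k t = (if t = i then (if k = i then of_real (cos \<phi>) else 0) +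
             (if k = j then cnj (exp (\<i> * of_real \<alpha>)) * of_real (sin \<phi>) else 0)
        else if t = j then (if k = i then - (exp (\<i> * of_real \<alpha>) * of_real (sin \<phi>)) else 0) +
             (if k = j then of_real (cos \<phi>) else 0)
        else (if k = t then 1 else 0))"
  using assms by (auto simp: rot_def exp_cnj)

lemma mmul_rot_right:
  assumes "i \<noteq> j" "i \<in> {1..n}" "j \<in> {1..n}" "t \<in> {1..n}"
  shows "mmul n X (rot i j \<phi> \<alpha>) r t =
    rmul i j (of_real (cos \<phi>)) (of_real (sin \<phi>)) (exp (\<i> * of_real \<alpha>)) X r t"
proof -
  let ?c = "complex_of_real (cos \<phi>)" and ?s = "complex_of_real (sin \<phi>)"
    and ?w = "exp (\<i> * complex_of_real \<alpha>)"
  show ?thesis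
  proof (cases "t = i \<or> t = j")
    case True
    then show ?thesis
    proof
      assume t: "t = i"
      have "mmul n X (rot i j \<phi> \<alpha>) r t = (\<Sum>k\<in>{1..n}. (if k = i then X r i * ?c else 0) +
           (if k = j then X r j * (cnj ?w * ?s) else 0))"
        unfolding mmul_def using t assms(1)
        by (intro sum.cong) (auto simp: rot_col)
      also have "\<dots> = X r i * ?c + X r j * (cnj ?w * ?s)"
        using assms by (intro sum_two_deltas) auto
      finally show ?thesis using t by (simp add: rmul_def algebra_simps)
    next
      assume t: "t = j"
      have "mmul n X (rot i j \<phi> \<alpha>) r t = (\<Sum>k\<in>{1..n}. (if k = i then X r i * (- (?w * ?s)) else 0) +
           (if k = j then X r j * ?c else 0))"
        unfolding mmul_def using t assms(1)
        by (intro sum.cong) (auto simp: rot_col)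
      also have "\<dots> = X r i * (- (?w * ?s)) + X r j * ?c"
        using assms by (intro sum_two_deltas) auto
      finally show ?thesis using t assms(1) by (simp add: rmul_def algebra_simps)
    qed
  next
    case False
    have "mmul n X (rot i j \<phi> \<alpha>) r t = (\<Sum>k\<in>{1..n}. if k = t then X r t else 0)"
      unfolding mmul_def using False assms(1)
      by (intro sum.cong) (auto simp: rot_col)
    also have "\<dots> = X r t" using assms by simp
    finally show ?thesis using False by (simp add: rmul_def)
  qed
qed

lemma mmul_rot_left:
  assumes "i \<noteq> j" "i \<in> {1..n}" "j \<in> {1..n}" "r \<in> {1..n}"
  shows "mmul n (Defs.adjoint (rot i j \<phi> \<alpha>)) Z r t =
    lmul i j (of_real (cos \<phi>)) (of_real (sin \<phi>)) (exp (\<i> * of_real \<alpha>)) Z r t"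
proof -
  let ?c = "complex_of_real (cos \<phi>)" and ?s = "complex_of_real (sin \<phi>)"
    and ?w = "exp (\<i> * complex_of_real \<alpha>)"
  show ?thesis
  proof (cases "r = i \<or> r = j")
    case True
    then show ?thesis
    proof
      assume t: "r = i"
      have "mmul n (Defs.adjoint (rot i j \<phi> \<alpha>)) Z r t = (\<Sum>k\<in>{1..n}. (if k = i then ?c * Z i t else 0) +
           (if k = j then ?w * ?s * Z j t else 0))"
        unfolding mmul_def Defs.adjoint_def using t assms(1)
        by (intro sum.cong) (auto simp: rot_col)
      also have "\<dots> = ?c * Z i t + ?w * ?s * Z j t"
        using assms by (intro sum_two_deltas) auto
      finally show ?thesis using t by (simp add: lmul_def algebra_simps)
    next
      assume t: "r = j"
      have "mmul n (Defs.adjoint (rot i j \<phi> \<alpha>)) Z r t = (\<Sum>k\<in>{1..n}. (if k = i then - (cnj ?w * ?s) * Z i t else 0) +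
           (if k = j then ?c * Z j t else 0))"
        unfolding mmul_def Defs.adjoint_def using t assms(1)
        by (intro sum.cong) (auto simp: rot_col)
      also have "\<dots> = - (cnj ?w * ?s) * Z i t + ?c * Z j t"
        using assms by (intro sum_two_deltas) auto
      finally show ?thesis using t assms(1) by (simp add: lmul_def algebra_simps)
    qed
  next
    case False
    have "mmul n (Defs.adjoint (rot i j \<phi> \<alpha>)) Z r t = (\<Sum>k\<in>{1..n}. if k = r then Z r t else 0)"
      unfolding mmul_def Defs.adjoint_def using False assms(1)
      by (intro sum.cong) (auto simp: rot_col)
    also have "\<dots> = Z r t" using assms by simp
    finally show ?thesis using False by (simp add: lmul_def)
  qed
qed

lemma mmul_conj_rot:
  assumes "i \<noteq> j" "i \<in> {1..n}" "j \<in> {1..n}" "r \<in> {1..n}" "t \<in> {1..n}"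
  shows "mmul n (Defs.adjoint (rot i j \<phi> \<alpha>)) (mmul n X (rot i j \<phi> \<alpha>)) r t =
    conjr i j \<phi> (exp (\<i> * of_real \<alpha>)) X r t"
proof -
  have "mmul n (Defs.adjoint (rot i j \<phi> \<alpha>)) (mmul n X (rot i j \<phi> \<alpha>)) r t =
     lmul i j (of_real (cos \<phi>)) (of_real (sin \<phi>)) (exp (\<i> * of_real \<alpha>)) (mmul n X (rot i j \<phi> \<alpha>)) r t"
    using assms(1-4) by (rule mmul_rot_left)
  also have "\<dots> = conjr i j \<phi> (exp (\<i> * of_real \<alpha>)) X r t"
    using assms mmul_rot_right[OF assms(1-3)]
    unfolding conjr_def lmul_def by auto
  finally show ?thesis .
qed

lemma wcnj: "cmod w = 1 \<Longrightarrow> w * cnj w = 1"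
  by (metis complex_norm_square mult.right_neutral of_real_1 power2_eq_square)

lemma wcnj': "cmod w = 1 \<Longrightarrow> cnj w * w = 1"
  using wcnj by (simp add: mult.commute)

lemma cs1: "complex_of_real (cos x) * complex_of_real (cos x) + complex_of_real (sin x) * complex_of_real (sin x) = 1"
  by (metis of_real_1 of_real_add of_real_mult sin_cos_squared_add3 add.commute)

lemma rmul_inv:
  assumes "i \<noteq> j" "c * c + s * s = 1" "w * cnj w = 1"
  shows "rmul i j c (- s) w (rmul i j c s w X) = X"
proof (intro ext)
  fix r t
  have e1: "c * (c * a + cnj w * s * b) + cnj w * - s * (- (w * s * a) + c * b) = a" for a b
  proof -
    have "c * (c * a + cnj w * s * b) + cnj w * - s * (- (w * s * a) + c * b) = (c*c + (w * cnj w) * (s * s)) * a"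
      by (simp add: algebra_simps)
    then show ?thesis using assms by simp
  qed
  have e2: "- (w * - s * (c * a + cnj w * s * b)) + c * (- (w * s * a) + c * b) = b" for a b
  proof -
    have "- (w * - s * (c * a + cnj w * s * b)) + c * (- (w * s * a) + c * b) = (c*c + (w * cnj w) * (s * s)) * b"
      by (simp add: algebra_simps)
    then show ?thesis using assms by simp
  qed
  show "rmul i j c (- s) w (rmul i j c s w X) r t = X r t"
    using assms(1) e1 e2 by (auto simp: rmul_def)
qed

lemma lmul_inv:
  assumes "i \<noteq> j" "c * c + s * s = 1" "w * cnj w = 1"
  shows "lmul i j c (- s) w (lmul i j c s w X) = X"
proof (intro ext)
  fix r t
  have e1: "c * (c * a + w * s * b) + w * - s * (- (cnj w * s * a) + c * b) = a" for a b
  proof -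
    have "c * (c * a + w * s * b) + w * - s * (- (cnj w * s * a) + c * b) = (c*c + (w * cnj w) * (s * s)) * a"
      by (simp add: algebra_simps)
    then show ?thesis using assms by simp
  qed
  have e2: "- (cnj w * - s * (c * a + w * s * b)) + c * (- (cnj w * s * a) + c * b) = b" for a b
  proof -
    have "- (cnj w * - s * (c * a + w * s * b)) + c * (- (cnj w * s * a) + c * b) = (c*c + (w * cnj w) * (s * s)) * b"
      by (simp add: algebra_simps)
    then show ?thesis using assms by simp
  qed
  show "lmul i j c (- s) w (lmul i j c s w X) r t = X r t"
    using assms(1) e1 e2 by (auto simp: lmul_def)
qed

lemma lmul_rmul_comm:
  "lmul i j c s w (rmul k l c' s' w' X) = rmul k l c' s' w' (lmul i j c s w X)"
  by (intro ext) (auto simp: lmul_def rmul_def algebra_simps)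

lemma conjr_inv:
  assumes "i \<noteq> j" "cmod w = 1"
  shows "conjr i j (- \<phi>) w (conjr i j \<phi> w X) = X"
proof -
  have h: "complex_of_real (cos \<phi>) * complex_of_real (cos \<phi>) + complex_of_real (sin \<phi>) * complex_of_real (sin \<phi>) = 1"
    by (rule cs1)
  show ?thesis
    unfolding conjr_def cos_minus sin_minus of_real_minus
    by (simp add: lmul_rmul_comm lmul_inv[OF assms(1) h wcnj[OF assms(2)]] rmul_inv[OF assms(1) h wcnj[OF assms(2)]])
qed

lemma conjr_inv':
  assumes "i \<noteq> j" "cmod w = 1"
  shows "conjr i j \<phi> w (conjr i j (- \<phi>) w X) = X"
  using conjr_inv[OF assms, of "- \<phi>"] by simp

lemma conjr_swap:
  assumes "i \<noteq> j"
  shows "conjr j i \<phi> w X = conjr i j (- \<phi>) (cnj w) X"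
  using assms by (intro ext) (auto simp: conjr_def lmul_def rmul_def algebra_simps)

lemma conjr_comm:
  assumes "i \<noteq> k" "i \<noteq> l" "j \<noteq> k" "j \<noteq> l"
  shows "conjr i j \<phi> w (conjr k l \<psi> v X) = conjr k l \<psi> v (conjr i j \<phi> w X)"
  using assms by (intro ext) (auto simp: conjr_def lmul_def rmul_def algebra_simps)

lemma conjr_unchanged:
  "r \<noteq> i \<Longrightarrow> r \<noteq> j \<Longrightarrow> s \<noteq> i \<Longrightarrow> s \<noteq> j \<Longrightarrow> conjr i j \<phi> w X r s = X r s"
  by (simp add: conjr_def lmul_def rmul_def)

lemma conjr_zero: "conjr i j \<phi> w (\<lambda>_ _. 0) = (\<lambda>_ _. 0)"
  by (intro ext) (simp add: conjr_def lmul_def rmul_def)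

lemma conjr_scale: "conjr i j \<phi> w (\<lambda>r s. a * X r s) = (\<lambda>r s. a * conjr i j \<phi> w X r s)"
  by (intro ext) (simp add: conjr_def lmul_def rmul_def algebra_simps)

lemma conjr_block_zero:
  assumes "i \<noteq> j" "X i i = 0" "X j j = 0" "X i j = 0" "X j i = 0"
  shows "conjr i j \<phi> w X i i = 0" "conjr i j \<phi> w X j j = 0"
    "conjr i j \<phi> w X i j = 0" "conjr i j \<phi> w X j i = 0"
  using assms by (simp_all add: conjr_def lmul_def rmul_def)

definition outer :: "(nat \<Rightarrow> complex) \<Rightarrow> (nat \<Rightarrow> complex) \<Rightarrow> (nat \<Rightarrow> complex) \<Rightarrow> cmatrix" where
  "outer a e b = (\<lambda>r s. a r * cnj (e s) + e r * cnj (b s))"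

definition vrot :: "nat \<Rightarrow> nat \<Rightarrow> real \<Rightarrow> complex \<Rightarrow> (nat \<Rightarrow> complex) \<Rightarrow> (nat \<Rightarrow> complex)" where
  "vrot i j \<phi> w a = (\<lambda>r. if r = i then of_real (cos \<phi>) * a i + w * of_real (sin \<phi>) * a j
     else if r = j then - (cnj w * of_real (sin \<phi>) * a i) + of_real (cos \<phi>) * a j else a r)"

lemma conjr_outer:
  assumes "i \<noteq> j"
  shows "conjr i j \<phi> w (outer a e b) = outer (vrot i j \<phi> w a) (vrot i j \<phi> w e) (vrot i j \<phi> w b)"
  using assms by (intro ext) (auto simp: conjr_def lmul_def rmul_def outer_def vrot_def algebra_simps)

fun cev :: "(nat \<Rightarrow> nat \<times> nat) \<Rightarrow> (nat \<Rightarrow> real) \<Rightarrow> (nat \<Rightarrow> complex) \<Rightarrow> cmatrix \<Rightarrow> nat \<Rightarrow> cmatrix" where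
  "cev P \<phi> w X 0 = X"
| "cev P \<phi> w X (Suc k) = conjr (fst (P k)) (snd (P k)) (\<phi> k) (w k) (cev P \<phi> w X k)"

definition pz :: "(nat \<Rightarrow> nat \<times> nat) \<Rightarrow> (nat \<Rightarrow> real) \<Rightarrow> (nat \<Rightarrow> complex) \<Rightarrow> cmatrix \<Rightarrow> nat \<Rightarrow> bool" where
  "pz P \<phi> w X M \<longleftrightarrow> (\<forall>k<M. cev P \<phi> w X k (fst (P k)) (snd (P k)) = 0 \<and>
      cev P \<phi> w X k (snd (P k)) (fst (P k)) = 0)"

definition zo :: "nat \<Rightarrow> cmatrix \<Rightarrow> bool" where
  "zo n X \<longleftrightarrow> (\<forall>r s. r \<notin> {1..n} \<or> s \<notin> {1..n} \<longrightarrow> X r s = 0)"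

definition zd :: "cmatrix \<Rightarrow> bool" where
  "zd X \<longleftrightarrow> (\<forall>r. X r r = 0)"

definition okang :: "(nat \<Rightarrow> real) \<Rightarrow> (nat \<Rightarrow> complex) \<Rightarrow> bool" where
  "okang \<phi> w \<longleftrightarrow> (\<forall>k. \<bar>\<phi> k\<bar> \<le> pi / 4) \<and> (\<forall>k. cmod (w k) = 1)"

definition goodP :: "nat \<Rightarrow> (nat \<Rightarrow> nat \<times> nat) \<Rightarrow> nat \<Rightarrow> bool" where
  "goodP n P M \<longleftrightarrow> (\<forall>X \<phi> w. zo n X \<longrightarrow> zd X \<longrightarrow> okang \<phi> w \<longrightarrow> pz P \<phi> w X M \<longrightarrow> X = (\<lambda>_ _. 0))"

definition validP :: "nat \<Rightarrow> (nat \<Rightarrow> nat \<times> nat) \<Rightarrow> nat \<Rightarrow> bool" where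
  "validP n P M \<longleftrightarrow> (\<forall>k<M. P k \<in> pairs n)"

definition goodL :: "nat \<Rightarrow> (nat \<times> nat) list \<Rightarrow> bool" where
  "goodL n ps \<longleftrightarrow> set ps \<subseteq> pairs n \<and> goodP n (nth ps) (length ps)"

lemma pairs_ne: "p \<in> pairs n \<Longrightarrow> fst p \<noteq> snd p"
  by (auto simp: pairs_def)

lemma pairs_range: "p \<in> pairs n \<Longrightarrow> fst p \<in> {1..n} \<and> snd p \<in> {1..n}"
  by (auto simp: pairs_def)

lemma cev_add:
  "cev P \<phi> w X (m + t) = cev (\<lambda>k. P (m + k)) (\<lambda>k. \<phi> (m + k)) (\<lambda>k. w (m + k)) (cev P \<phi> w X m) t"
  by (induction t) auto

lemma cev_cong:
  "(\<And>k. k < t \<Longrightarrow> P k = P' k \<and> \<phi> k = \<phi>' k \<and> w k = w' k) \<Longrightarrow> cev P \<phi> w X t = cev P' \<phi>' w' X t"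
  by (induction t) auto

lemma pz_mono: "pz P \<phi> w X M \<Longrightarrow> M' \<le> M \<Longrightarrow> pz P \<phi> w X M'"
  by (auto simp: pz_def)

lemma pz_add:
  "pz P \<phi> w X (m + t) \<longleftrightarrow> pz P \<phi> w X m \<and>
     pz (\<lambda>k. P (m + k)) (\<lambda>k. \<phi> (m + k)) (\<lambda>k. w (m + k)) (cev P \<phi> w X m) t"
proof -
  have e: "(\<forall>k<m + t. Q k) \<longleftrightarrow> (\<forall>k<m. Q k) \<and> (\<forall>k<t. Q (m + k))" for Q
    by (metis add_diff_inverse_nat add_less_cancel_left trans_less_add1)
  show ?thesis unfolding pz_def e by (simp add: cev_add)
qed

lemma pz_cong: "(\<And>k. k < M \<Longrightarrow> P k = P' k) \<Longrightarrow> pz P \<phi> w X M \<longleftrightarrow> pz P' \<phi> w X M"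
proof -
  assume H: "\<And>k. k < M \<Longrightarrow> P k = P' k"
  have "cev P \<phi> w X k = cev P' \<phi> w X k" if "k < M" for k
    using that H by (intro cev_cong) auto
  then show ?thesis unfolding pz_def using H by auto
qed

lemma goodP_cong: "(\<And>k. k < M \<Longrightarrow> P k = P' k) \<Longrightarrow> goodP n P M \<Longrightarrow> goodP n P' M"
  unfolding goodP_def using pz_cong by metis

lemma validP_cong: "(\<And>k. k < M \<Longrightarrow> P k = P' k) \<Longrightarrow> validP n P M \<Longrightarrow> validP n P' M"
  unfolding validP_def by auto

lemma zo_conjr: "i \<in> {1..n} \<Longrightarrow> j \<in> {1..n} \<Longrightarrow> zo n X \<Longrightarrow> zo n (conjr i j \<phi> w X)"
  unfolding zo_def by (auto simp: conjr_def lmul_def rmul_def)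

lemma zo_cev: "validP n P t \<Longrightarrow> zo n X \<Longrightarrow> zo n (cev P \<phi> w X t)"
proof (induction t)
  case (Suc t)
  then have "P t \<in> pairs n" "validP n P t" by (auto simp: validP_def)
  then show ?case using Suc zo_conjr pairs_range by simp
qed simp

lemma zd_conjr:
  assumes "i \<noteq> j" "zd X" "X i j = 0" "X j i = 0"
  shows "zd (conjr i j \<phi> w X)"
  unfolding zd_def
proof
  fix r
  show "conjr i j \<phi> w X r r = 0"
  proof (cases "r = i \<or> r = j")
    case True then show ?thesis using conjr_block_zero[of i j X] assms by (auto simp: zd_def)
  next
    case False then show ?thesis using conjr_unchanged assms(2) by (auto simp: zd_def)
  qed
qed

lemma zd_cev: "validP n P t \<Longrightarrow> zd X \<Longrightarrow> pz P \<phi> w X t \<Longrightarrow> zd (cev P \<phi> w X t)"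
proof (induction t)
  case (Suc t)
  then have "P t \<in> pairs n" "validP n P t" "pz P \<phi> w X t" by (auto simp: validP_def pz_def)
  moreover have "cev P \<phi> w X t (fst (P t)) (snd (P t)) = 0" "cev P \<phi> w X t (snd (P t)) (fst (P t)) = 0"
    using Suc.prems(3) by (auto simp: pz_def)
  ultimately show ?case using Suc zd_conjr pairs_ne by simp
qed simp

lemma cev_zero_imp:
  "validP n P t \<Longrightarrow> okang \<phi> w \<Longrightarrow> cev P \<phi> w X t = (\<lambda>_ _. 0) \<Longrightarrow> X = (\<lambda>_ _. 0)"
proof (induction t)
  case (Suc t)
  then have v: "P t \<in> pairs n" "validP n P t" by (auto simp: validP_def)
  have "cmod (w t) = 1" using Suc.prems(2) by (auto simp: okang_def)
  then have "cev P \<phi> w X t = conjr (fst (P t)) (snd (P t)) (- \<phi> t) (w t) (cev P \<phi> w X (Suc t))"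
    using conjr_inv pairs_ne[OF v(1)] by simp
  also have "\<dots> = (\<lambda>_ _. 0)" using Suc.prems(3) conjr_zero by simp
  finally show ?case using Suc v by blast
qed simp

lemma goodP_extend:
  assumes g: "goodP n (\<lambda>k. P (m + k)) M" and v: "validP n P m" and le: "m + M \<le> M'"
  shows "goodP n P M'"
  unfolding goodP_def
proof (intro allI impI)
  fix X \<phi> w assume zo: "zo n X" and zd: "zd X" and ok: "okang \<phi> w" and pzM: "pz P \<phi> w X M'"
  have "pz P \<phi> w X (m + M)" using pzM le pz_mono by blast
  then have p1: "pz P \<phi> w X m" and p2: "pz (\<lambda>k. P (m + k)) (\<lambda>k. \<phi> (m + k)) (\<lambda>k. w (m + k)) (cev P \<phi> w X m) M"
    using pz_add by blast+
  have "zo n (cev P \<phi> w X m)" using zo_cev v zo by blast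
  moreover have "zd (cev P \<phi> w X m)" using zd_cev v zd p1 by blast
  moreover have "okang (\<lambda>k. \<phi> (m + k)) (\<lambda>k. w (m + k))" using ok by (auto simp: okang_def)
  ultimately have "cev P \<phi> w X m = (\<lambda>_ _. 0)" using g p2 unfolding goodP_def by blast
  then show "X = (\<lambda>_ _. 0)" using cev_zero_imp v ok by blast
qed

lemma goodL_extend:
  assumes g: "goodL n ps" and xs: "set xs \<subseteq> pairs n" and ys: "set ys \<subseteq> pairs n"
  shows "goodL n (xs @ ps @ ys)"
proof -
  have s: "set (xs @ ps @ ys) \<subseteq> pairs n" using g xs ys by (auto simp: goodL_def)
  have "goodP n (\<lambda>k. (xs @ ps @ ys) ! (length xs + k)) (length ps)"
    using g unfolding goodL_def by (auto intro: goodP_cong simp: nth_append)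
  moreover have "validP n (nth (xs @ ps @ ys)) (length xs)"
    using xs by (auto simp: validP_def nth_append)
  ultimately have "goodP n (nth (xs @ ps @ ys)) (length (xs @ ps @ ys))"
    by (rule goodP_extend) simp
  then show ?thesis using s by (simp add: goodL_def)
qed

lemma goodP_rev:
  assumes g: "goodP n P M" and v: "validP n P M"
  shows "goodP n (\<lambda>k. P (M - Suc k)) M"
  unfolding goodP_def
proof (intro allI impI)
  fix X \<phi> w assume zo: "zo n X" and zd: "zd X" and ok: "okang \<phi> w"
    and pzM: "pz (\<lambda>k. P (M - Suc k)) \<phi> w X M"
  let ?P' = "\<lambda>k. P (M - Suc k)"
  define Z where "Z = cev ?P' \<phi> w X"
  define \<phi>2 where "\<phi>2 = (\<lambda>k. - \<phi> (M - Suc k))"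
  define w2 where "w2 = (\<lambda>k. w (M - Suc k))"
  have v': "validP n ?P' M" using v by (auto simp: validP_def)
  have bk: "cev P \<phi>2 w2 (Z M) t = Z (M - t)" if "t \<le> M" for t
    using that
  proof (induction t)
    case 0 then show ?case by simp
  next
    case (Suc t)
    define m' where "m' = M - Suc t"
    have mt: "M - t = Suc m'" using Suc.prems by (simp add: m'_def)
    have pt: "?P' m' = P t" using Suc.prems by (simp add: m'_def)
    have vv: "P t \<in> pairs n" using v Suc.prems by (auto simp: validP_def)
    have cw: "cmod (w m') = 1" using ok by (auto simp: okang_def)
    have "cev P \<phi>2 w2 (Z M) (Suc t) = conjr (fst (P t)) (snd (P t)) (- \<phi> m') (w m') (Z (Suc m'))"
      using Suc by (simp add: \<phi>2_def w2_def m'_def mt)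
    also have "Z (Suc m') = conjr (fst (P t)) (snd (P t)) (\<phi> m') (w m') (Z m')"
      by (simp add: Z_def pt)
    also have "conjr (fst (P t)) (snd (P t)) (- \<phi> m') (w m') \<dots> = Z m'"
      using conjr_inv[OF pairs_ne[OF vv] cw] by simp
    finally show ?case by (simp add: m'_def)
  qed
  have zdZ: "zd (Z k)" if "k \<le> M" for k
    using zd_cev[of n ?P' k X \<phi> w] v' zd pz_mono[OF pzM that] that
    by (auto simp: Z_def validP_def)
  have pz2: "pz P \<phi>2 w2 (Z M) M"
    unfolding pz_def
  proof (intro allI impI)
    fix k assume k: "k < M"
    define m' where "m' = M - Suc k"
    have mt: "M - k = Suc m'" using k by (simp add: m'_def)
    have pt: "?P' m' = P k" using k by (simp add: m'_def)
    have vv: "P k \<in> pairs n" using v k by (auto simp: validP_def)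
    have "m' < M" using k by (simp add: m'_def)
    then have z1: "Z m' (fst (P k)) (snd (P k)) = 0" "Z m' (snd (P k)) (fst (P k)) = 0"
      using pzM pt by (auto simp: pz_def Z_def)
    have z2: "Z m' (fst (P k)) (fst (P k)) = 0" "Z m' (snd (P k)) (snd (P k)) = 0"
      using zdZ[of m'] \<open>m' < M\<close> by (auto simp: zd_def)
    have "cev P \<phi>2 w2 (Z M) k = Z (Suc m')" using bk[of k] k mt by simp
    also have "\<dots> = conjr (fst (P k)) (snd (P k)) (\<phi> m') (w m') (Z m')"
      by (simp add: Z_def pt)
    finally show "cev P \<phi>2 w2 (Z M) k (fst (P k)) (snd (P k)) = 0 \<and> cev P \<phi>2 w2 (Z M) k (snd (P k)) (fst (P k)) = 0"
      using conjr_block_zero[OF pairs_ne[OF vv] z2(1) z2(2) z1(1) z1(2)] by simp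
  qed
  have "zo n (Z M)" using zo_cev[OF v' zo] by (simp add: Z_def)
  moreover have "zd (Z M)" using zdZ by simp
  moreover have "okang \<phi>2 w2" using ok by (auto simp: okang_def \<phi>2_def w2_def)
  ultimately have "Z M = (\<lambda>_ _. 0)" using g pz2 unfolding goodP_def by blast
  then show "X = (\<lambda>_ _. 0)" using cev_zero_imp[OF v' ok] by (simp add: Z_def)
qed

lemma goodL_rev: "goodL n ps \<Longrightarrow> goodL n (rev ps)"
proof -
  assume g: "goodL n ps"
  then have v: "validP n (nth ps) (length ps)" by (auto simp: goodL_def validP_def)
  have "goodP n (\<lambda>k. ps ! (length ps - Suc k)) (length ps)"
    using goodP_rev g v by (auto simp: goodL_def)
  then have "goodP n (nth (rev ps)) (length ps)"
    by (rule goodP_cong[rotated]) (simp add: rev_nth)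
  then show ?thesis using g by (simp add: goodL_def)
qed

lemma goodP_swap:
  assumes g: "goodP n P M" and v: "validP n P M" and p: "Suc p < M"
    and dj: "{fst (P p), snd (P p)} \<inter> {fst (P (Suc p)), snd (P (Suc p))} = {}"
  shows "goodP n (P(p := P (Suc p), Suc p := P p)) M"
proof -
  define P' where "P' = P(p := P (Suc p), Suc p := P p)"
  have P'1: "P' p = P (Suc p)" and P'2: "P' (Suc p) = P p" and P'3: "\<And>k. k \<noteq> p \<Longrightarrow> k \<noteq> Suc p \<Longrightarrow> P' k = P k"
    by (auto simp: P'_def)
  have "goodP n P' M"
    unfolding goodP_def
  proof (intro allI impI)
    fix X \<phi> w assume zo: "zo n X" and zd: "zd X" and ok: "okang \<phi> w"
    assume pzM: "pz P' \<phi> w X M"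
    define \<phi>' where "\<phi>' = \<phi>(p := \<phi> (Suc p), Suc p := \<phi> p)"
    define w' where "w' = w(p := w (Suc p), Suc p := w p)"
    have eq1: "cev P \<phi>' w' X t = cev P' \<phi> w X t" if "t \<le> p" for t
      using that by (intro cev_cong) (auto simp: \<phi>'_def w'_def P'3)
    have eq2: "cev P \<phi>' w' X (Suc (Suc p)) = cev P' \<phi> w X (Suc (Suc p))"
    proof -
      have "cev P \<phi>' w' X (Suc (Suc p)) = conjr (fst (P (Suc p))) (snd (P (Suc p))) (\<phi> p) (w p)
          (conjr (fst (P p)) (snd (P p)) (\<phi> (Suc p)) (w (Suc p)) (cev P \<phi>' w' X p))"
        by (simp add: \<phi>'_def w'_def)
      also have "\<dots> = conjr (fst (P p)) (snd (P p)) (\<phi> (Suc p)) (w (Suc p))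
          (conjr (fst (P (Suc p))) (snd (P (Suc p))) (\<phi> p) (w p) (cev P \<phi>' w' X p))"
        using dj by (intro conjr_comm) auto
      also have "\<dots> = cev P' \<phi> w X (Suc (Suc p))" using eq1[of p] by (simp add: P'1 P'2)
      finally show ?thesis .
    qed
    have eq3: "cev P \<phi>' w' X (t + Suc (Suc p)) = cev P' \<phi> w X (t + Suc (Suc p))" for t
    proof (induction t)
      case 0 then show ?case using eq2 by simp
    next
      case (Suc t)
      have "t + Suc (Suc p) \<noteq> p" "t + Suc (Suc p) \<noteq> Suc p" by auto
      then show ?case using Suc by (simp add: \<phi>'_def w'_def P'3)
    qed
    have eqs: "cev P \<phi>' w' X t = cev P' \<phi> w X t" if "t \<noteq> Suc p" for t
    proof (cases "t \<le> p")
      case True then show ?thesis using eq1 by simp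
    next
      case False
      then have "t = (t - Suc (Suc p)) + Suc (Suc p)" using that by simp
      then show ?thesis using eq3 by metis
    qed
    have pz2: "pz P \<phi>' w' X M"
      unfolding pz_def
    proof (intro allI impI)
      fix k assume k: "k < M"
      show "cev P \<phi>' w' X k (fst (P k)) (snd (P k)) = 0 \<and> cev P \<phi>' w' X k (snd (P k)) (fst (P k)) = 0"
      proof (cases "k = p \<or> k = Suc p")
        case False
        then have "cev P \<phi>' w' X k = cev P' \<phi> w X k" "P k = P' k" using eqs P'3 by auto
        then show ?thesis using pzM k unfolding pz_def by metis
      next
        case True
        then show ?thesis
        proof
          assume kp: "k = p"
          have h: "cev P' \<phi> w X (Suc p) (fst (P p)) (snd (P p)) = 0 \<and> cev P' \<phi> w X (Suc p) (snd (P p)) (fst (P p)) = 0"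
            using pzM p P'2 unfolding pz_def by metis
          have "cev P' \<phi> w X (Suc p) = conjr (fst (P (Suc p))) (snd (P (Suc p))) (\<phi> p) (w p) (cev P' \<phi> w X p)"
            by (simp add: P'1)
          then have "cev P' \<phi> w X (Suc p) (fst (P p)) (snd (P p)) = cev P' \<phi> w X p (fst (P p)) (snd (P p))"
               "cev P' \<phi> w X (Suc p) (snd (P p)) (fst (P p)) = cev P' \<phi> w X p (snd (P p)) (fst (P p))"
            using dj conjr_unchanged by auto
          then show ?thesis using h kp eq1[of p] by simp
        next
          assume kp: "k = Suc p"
          have h: "cev P' \<phi> w X p (fst (P (Suc p))) (snd (P (Suc p))) = 0 \<and> cev P' \<phi> w X p (snd (P (Suc p))) (fst (P (Suc p))) = 0"
            using pzM p P'1 unfolding pz_def by (metis Suc_lessD)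
          have "cev P \<phi>' w' X (Suc p) = conjr (fst (P p)) (snd (P p)) (\<phi> (Suc p)) (w (Suc p)) (cev P \<phi>' w' X p)"
            by (simp add: \<phi>'_def w'_def)
          then have "cev P \<phi>' w' X (Suc p) (fst (P (Suc p))) (snd (P (Suc p))) = cev P \<phi>' w' X p (fst (P (Suc p))) (snd (P (Suc p)))"
               "cev P \<phi>' w' X (Suc p) (snd (P (Suc p))) (fst (P (Suc p))) = cev P \<phi>' w' X p (snd (P (Suc p))) (fst (P (Suc p)))"
            using dj conjr_unchanged by auto
          then show ?thesis using h kp eq1[of p] by simp
        qed
      qed
    qed
    have "okang \<phi>' w'" using ok by (auto simp: okang_def \<phi>'_def w'_def)
    then show "X = (\<lambda>_ _. 0)" using g zo zd pz2 unfolding goodP_def by blast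
  qed
  then show ?thesis by (simp add: P'_def)
qed

definition pm :: "(nat \<Rightarrow> nat) \<Rightarrow> nat \<times> nat \<Rightarrow> nat \<times> nat" where
  "pm q p = (min (q (fst p)) (q (snd p)), max (q (fst p)) (q (snd p)))"

definition tq :: "(nat \<Rightarrow> nat) \<Rightarrow> nat \<Rightarrow> cmatrix \<Rightarrow> cmatrix" where
  "tq q n X = (\<lambda>r s. if r \<in> {1..n} \<and> s \<in> {1..n} then X (q r) (q s) else 0)"

lemma tq_conjr:
  assumes q: "bij_betw q {1..n} {1..n}" and ij: "i \<in> {1..n}" "j \<in> {1..n}" "i \<noteq> j"
  shows "tq q n (conjr (q i) (q j) \<psi> v Y) = conjr i j \<psi> v (tq q n Y)"
proof (intro ext)
  fix r s
  have inj: "\<And>x y. x \<in> {1..n} \<Longrightarrow> y \<in> {1..n} \<Longrightarrow> (q x = q y) = (x = y)"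
    using q by (metis bij_betw_def inj_on_def)
  show "tq q n (conjr (q i) (q j) \<psi> v Y) r s = conjr i j \<psi> v (tq q n Y) r s"
  proof (cases "r \<in> {1..n} \<and> s \<in> {1..n}")
    case True
    have qr: "(q r = q i) = (r = i)" "(q r = q j) = (r = j)" "(q s = q i) = (s = i)" "(q s = q j) = (s = j)"
      using inj True ij by auto
    have tqe: "\<And>a b. a \<in> {1..n} \<Longrightarrow> b \<in> {1..n} \<Longrightarrow> tq q n Y a b = Y (q a) (q b)"
      by (simp add: tq_def)
    have "tq q n (conjr (q i) (q j) \<psi> v Y) r s = conjr (q i) (q j) \<psi> v Y (q r) (q s)"
      using True by (simp add: tq_def)
    also have "\<dots> = conjr i j \<psi> v (tq q n Y) r s"
      unfolding conjr_def lmul_def rmul_def qr using True ij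
      using True ij by (simp add: conjr_def lmul_def rmul_def qr tq_def)
    finally show ?thesis .
  next
    case False
    then have "r \<notin> {1..n} \<or> s \<notin> {1..n}" by blast
    then show ?thesis
    proof
      assume r: "r \<notin> {1..n}"
      then have ne: "r \<noteq> i" "r \<noteq> j" using ij by auto
      have tz: "\<And>t. tq q n Y r t = 0" "\<And>t. tq q n (conjr (q i) (q j) \<psi> v Y) r t = 0"
        using r by (auto simp: tq_def)
      have "conjr i j \<psi> v (tq q n Y) r s = 0" using ne by (simp add: tz conjr_def lmul_def rmul_def)
      then show ?thesis using tz by simp
    next
      assume r: "s \<notin> {1..n}"
      then have ne: "s \<noteq> i" "s \<noteq> j" using ij by auto
      have tz: "\<And>t. tq q n Y t s = 0" "\<And>t. tq q n (conjr (q i) (q j) \<psi> v Y) t s = 0"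
        using r by (auto simp: tq_def)
      have "conjr i j \<psi> v (tq q n Y) r s = 0" using ne by (simp add: tz conjr_def lmul_def rmul_def)
      then show ?thesis using tz by simp
    qed
  qed
qed

lemma tq_conjr_pm:
  assumes q: "bij_betw q {1..n} {1..n}" and p: "p \<in> pairs n"
  shows "tq q n (conjr (fst (pm q p)) (snd (pm q p)) \<phi> w Y) =
    conjr (fst p) (snd p) (if q (fst p) < q (snd p) then \<phi> else - \<phi>)
       (if q (fst p) < q (snd p) then w else cnj w) (tq q n Y)"
proof -
  have ij: "fst p \<in> {1..n}" "snd p \<in> {1..n}" "fst p \<noteq> snd p" using p by (auto simp: pairs_def)
  have ne: "q (fst p) \<noteq> q (snd p)" using q ij by (metis bij_betw_def inj_on_def)
  show ?thesis
  proof (cases "q (fst p) < q (snd p)")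
    case True
    then show ?thesis using tq_conjr[OF q ij] by (simp add: pm_def)
  next
    case False
    then have "pm q p = (q (snd p), q (fst p))" using ne by (auto simp: pm_def)
    then show ?thesis using False tq_conjr[OF q ij] conjr_swap[OF ne] by simp
  qed
qed

lemma goodP_perm:
  assumes g: "goodP n P M" and v: "validP n P M" and q: "bij_betw q {1..n} {1..n}"
  shows "goodP n (\<lambda>k. pm q (P k)) M"
  unfolding goodP_def
proof (intro allI impI)
  fix X \<phi> w assume zo: "zo n X" and zd: "zd X" and ok: "okang \<phi> w"
    and pzM: "pz (\<lambda>k. pm q (P k)) \<phi> w X M"
  define \<phi>' where "\<phi>' = (\<lambda>k. if q (fst (P k)) < q (snd (P k)) then \<phi> k else - \<phi> k)"
  define w' where "w' = (\<lambda>k. if q (fst (P k)) < q (snd (P k)) then w k else cnj (w k))"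
  have ev: "cev P \<phi>' w' (tq q n X) t = tq q n (cev (\<lambda>k. pm q (P k)) \<phi> w X t)" if "t \<le> M" for t
    using that
  proof (induction t)
    case 0 then show ?case by simp
  next
    case (Suc t)
    then have "P t \<in> pairs n" using v by (auto simp: validP_def)
    then have "tq q n (conjr (fst (pm q (P t))) (snd (pm q (P t))) (\<phi> t) (w t) (cev (\<lambda>k. pm q (P k)) \<phi> w X t))
      = conjr (fst (P t)) (snd (P t)) (\<phi>' t) (w' t) (tq q n (cev (\<lambda>k. pm q (P k)) \<phi> w X t))"
      unfolding \<phi>'_def w'_def by (rule tq_conjr_pm[OF q])
    moreover have "cev P \<phi>' w' (tq q n X) t = tq q n (cev (\<lambda>k. pm q (P k)) \<phi> w X t)"
      using Suc by simp
    ultimately show ?case by simp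
  qed
  have pz2: "pz P \<phi>' w' (tq q n X) M"
    unfolding pz_def
  proof (intro allI impI)
    fix k assume k: "k < M"
    have pk: "P k \<in> pairs n" using v k by (auto simp: validP_def)
    have h: "cev (\<lambda>k. pm q (P k)) \<phi> w X k (fst (pm q (P k))) (snd (pm q (P k))) = 0"
         "cev (\<lambda>k. pm q (P k)) \<phi> w X k (snd (pm q (P k))) (fst (pm q (P k))) = 0"
      using pzM k by (auto simp: pz_def)
    have "pm q (P k) = (q (fst (P k)), q (snd (P k))) \<or> pm q (P k) = (q (snd (P k)), q (fst (P k)))"
      by (auto simp: pm_def min_def max_def)
    then have "cev (\<lambda>k. pm q (P k)) \<phi> w X k (q (fst (P k))) (q (snd (P k))) = 0 \<and>
       cev (\<lambda>k. pm q (P k)) \<phi> w X k (q (snd (P k))) (q (fst (P k))) = 0"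
      using h by auto
    then show "cev P \<phi>' w' (tq q n X) k (fst (P k)) (snd (P k)) = 0 \<and>
        cev P \<phi>' w' (tq q n X) k (snd (P k)) (fst (P k)) = 0"
      using ev[of k] k pk by (auto simp: tq_def pairs_def)
  qed
  have "zo n (tq q n X)" by (auto simp: zo_def tq_def)
  moreover have "zd (tq q n X)" using zd by (auto simp: zd_def tq_def)
  moreover have "okang \<phi>' w'" using ok by (auto simp: okang_def \<phi>'_def w'_def)
  ultimately have z: "tq q n X = (\<lambda>_ _. 0)" using g pz2 unfolding goodP_def by blast
  show "X = (\<lambda>_ _. 0)"
  proof (intro ext)
    fix r s
    show "X r s = 0"
    proof (cases "r \<in> {1..n} \<and> s \<in> {1..n}")
      case True
      then obtain r0 s0 where "r0 \<in> {1..n}" "s0 \<in> {1..n}" "r = q r0" "s = q s0"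
        using q by (metis bij_betw_def imageE)
      then show ?thesis using fun_cong[OF fun_cong[OF z, of r0], of s0] by (simp add: tq_def)
    next
      case False
      then show ?thesis using zo by (auto simp: zo_def)
    qed
  qed
qed

lemma pm_pairs:
  assumes q: "bij_betw q {1..n} {1..n}" and p: "p \<in> pairs n"
  shows "pm q p \<in> pairs n"
proof -
  obtain i j where ij: "p = (i, j)" "i < j" "i \<in> {1..n}" "j \<in> {1..n}" using p by (auto simp: pairs_def)
  have "q i \<in> {1..n}" "q j \<in> {1..n}" using q ij by (auto simp: bij_betw_def)
  moreover have "q i \<noteq> q j" using q ij by (metis bij_betw_def inj_on_def less_irrefl)
  ultimately show ?thesis using ij by (auto simp: pm_def pairs_def min_def max_def)
qed

lemma pm_inv:
  assumes q: "bij_betw q {1..n} {1..n}" and p: "p \<in> pairs n"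
  shows "pm (inv_into {1..n} q) (pm q p) = p"
proof -
  obtain i j where ij: "p = (i, j)" "i < j" "i \<in> {1..n}" "j \<in> {1..n}" using p by (auto simp: pairs_def)
  have "inv_into {1..n} q (q i) = i" "inv_into {1..n} q (q j) = j"
    using q ij by (auto simp: bij_betw_def inv_into_f_f)
  then show ?thesis using ij by (auto simp: pm_def min_def max_def)
qed

lemma goodL_perm:
  assumes g: "goodL n ps" and q: "bij_betw q {1..n} {1..n}"
  shows "goodL n (map (pm q) ps)"
proof -
  have v: "validP n (nth ps) (length ps)" using g by (auto simp: goodL_def validP_def)
  have "goodP n (\<lambda>k. pm q (ps ! k)) (length ps)" using goodP_perm g v q by (auto simp: goodL_def)
  then have "goodP n (nth (map (pm q) ps)) (length ps)" by (rule goodP_cong[rotated]) simp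
  moreover have "set (map (pm q) ps) \<subseteq> pairs n" using g q pm_pairs by (auto simp: goodL_def)
  ultimately show ?thesis by (simp add: goodL_def)
qed

lemma goodL_perm_back:
  assumes g: "goodL n (map (pm q) ps)" and q: "bij_betw q {1..n} {1..n}" and s: "set ps \<subseteq> pairs n"
  shows "goodL n ps"
proof -
  have q': "bij_betw (inv_into {1..n} q) {1..n} {1..n}" using q by (rule bij_betw_inv_into)
  have "map (pm (inv_into {1..n} q)) (map (pm q) ps) = ps"
    using s pm_inv[OF q] by (induction ps) auto
  then show ?thesis using goodL_perm[OF g q'] by simp
qed

lemma cev_zero: "cev P \<phi> w (\<lambda>_ _. 0) t = (\<lambda>_ _. 0)"
  by (induction t) (simp_all add: conjr_zero)

lemma bij_id_range: "bij_betw (\<lambda>a. a) {1..n} {1..(n::nat)}" by (simp add: bij_betw_def)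

lemma cev_tq_id:
  "validP m P t \<Longrightarrow> cev P \<phi> w (tq (\<lambda>a. a) m X) t = tq (\<lambda>a. a) m (cev P \<phi> w X t)"
proof (induction t)
  case (Suc t)
  then have v: "P t \<in> pairs m" "validP m P t" by (auto simp: validP_def)
  have "tq (\<lambda>a. a) m (conjr (fst (P t)) (snd (P t)) (\<phi> t) (w t) (cev P \<phi> w X t)) =
     conjr (fst (P t)) (snd (P t)) (\<phi> t) (w t) (tq (\<lambda>a. a) m (cev P \<phi> w X t))"
    using tq_conjr[OF bij_id_range, of "fst (P t)" m "snd (P t)"] v(1) by (auto simp: pairs_def)
  then show ?case using Suc v by simp
qed simp

lemma col_stage:
  assumes "distinct L" "N \<notin> set L" "\<forall>k. cos (\<phi> k) \<noteq> 0" "\<forall>k. cmod (w k) = 1"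
    "a N = 0" "b N = 0" "e N \<noteq> 0" "\<forall>t\<in>set L. e t = 0"
    "pz (\<lambda>k. (L ! k, N)) \<phi> w (outer a e b) (length L)"
  shows "\<forall>t\<in>set L. a t = 0 \<and> b t = 0"
  using assms
proof (induction L arbitrary: a e b \<phi> w)
  case Nil then show ?case by simp
next
  case (Cons r L)
  have rN: "r \<noteq> N" using Cons.prems(2) by auto
  have er: "e r = 0" using Cons.prems(8) by simp
  have p0: "outer a e b r N = 0" "outer a e b N r = 0"
    using Cons.prems(9) unfolding pz_def by (auto dest: spec[of _ 0])
  have ar: "a r = 0" using p0(1) er Cons.prems(7) by (simp add: outer_def)
  have br: "b r = 0" using p0(2) Cons.prems(5,7) by (simp add: outer_def)
  have "pz (\<lambda>k. (((r # L) ! (1 + k)), N)) (\<lambda>k. \<phi> (1 + k)) (\<lambda>k. w (1 + k))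
      (cev (\<lambda>k. ((r # L) ! k, N)) \<phi> w (outer a e b) 1) (length L)"
    using Cons.prems(9) pz_add[of "\<lambda>k. ((r # L) ! k, N)" \<phi> w "outer a e b" 1 "length L"] by simp
  moreover have "cev (\<lambda>k. ((r # L) ! k, N)) \<phi> w (outer a e b) 1 =
      outer (vrot r N (\<phi> 0) (w 0) a) (vrot r N (\<phi> 0) (w 0) e) (vrot r N (\<phi> 0) (w 0) b)"
    using conjr_outer[OF rN] by simp
  ultimately have pzL: "pz (\<lambda>k. (L ! k, N)) (\<lambda>k. \<phi> (Suc k)) (\<lambda>k. w (Suc k))
      (outer (vrot r N (\<phi> 0) (w 0) a) (vrot r N (\<phi> 0) (w 0) e) (vrot r N (\<phi> 0) (w 0) b)) (length L)"
    by simp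
  have c0: "cos (\<phi> 0) \<noteq> 0" using Cons.prems(3) by simp
  have h1: "distinct L" "N \<notin> set L" using Cons.prems(1,2) by auto
  have h2: "\<forall>k. cos (\<phi> (Suc k)) \<noteq> 0" "\<forall>k. cmod (w (Suc k)) = 1" using Cons.prems(3,4) by auto
  have h3: "vrot r N (\<phi> 0) (w 0) a N = 0" using rN ar Cons.prems(5) by (simp add: vrot_def)
  have h4: "vrot r N (\<phi> 0) (w 0) b N = 0" using rN br Cons.prems(6) by (simp add: vrot_def)
  have h5: "vrot r N (\<phi> 0) (w 0) e N \<noteq> 0" using rN er Cons.prems(7) c0 by (simp add: vrot_def)
  have h6: "\<forall>t\<in>set L. vrot r N (\<phi> 0) (w 0) e t = 0" using Cons.prems(1,2,8) by (auto simp: vrot_def)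
  have IH: "\<forall>t\<in>set L. vrot r N (\<phi> 0) (w 0) a t = 0 \<and> vrot r N (\<phi> 0) (w 0) b t = 0"
    using Cons.IH[where a="vrot r N (\<phi> 0) (w 0) a" and e="vrot r N (\<phi> 0) (w 0) e" and b="vrot r N (\<phi> 0) (w 0) b"
       and \<phi>="\<lambda>k. \<phi> (Suc k)" and w="\<lambda>k. w (Suc k)"] h1 h2 h3 h4 h5 h6 pzL by blast
  have "\<forall>t\<in>set L. a t = 0 \<and> b t = 0"
  proof
    fix t assume t: "t \<in> set L"
    then have "t \<noteq> r" "t \<noteq> N" using Cons.prems(1,2) by auto
    then show "a t = 0 \<and> b t = 0" using bspec[OF IH t] by (simp add: vrot_def)
  qed
  then show ?case using ar br by simp
qed

definition ccl :: "(nat \<Rightarrow> nat list) \<Rightarrow> nat \<Rightarrow> (nat \<times> nat) list" where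
  "ccl L n = concat (map (\<lambda>j. map (\<lambda>i. (i, j)) (L j)) [2..<Suc n])"

lemma ccl_set:
  assumes "\<forall>j\<in>{2..n}. distinct (L j) \<and> set (L j) = {1..<j}"
  shows "set (ccl L n) \<subseteq> pairs n"
  using assms by (auto simp: ccl_def pairs_def)

lemma goodP_triv:
  assumes "n \<le> 1" shows "goodP n P 0"
  unfolding goodP_def
proof (intro allI impI ext)
  fix X :: cmatrix and \<phi> w r s assume "zo n X" "zd X"
  then show "X r s = 0" using assms
    by (cases "r = s") (auto simp: zo_def zd_def)
qed

lemma okang_cos: "okang \<phi> w \<Longrightarrow> cos (\<phi> k) > 0"
proof -
  assume "okang \<phi> w"
  then have "\<bar>\<phi> k\<bar> \<le> pi / 4" by (simp add: okang_def)
  then show ?thesis using pi_gt_zero by (intro cos_gt_zero_pi) linarith+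
qed

lemma ccl_good:
  assumes "\<forall>j\<in>{2..n}. distinct (L j) \<and> set (L j) = {1..<j}"
  shows "goodL n (ccl L n)"
  using assms
proof (induction n)
  case 0 then show ?case by (simp add: goodL_def ccl_def goodP_triv)
next
  case (Suc n)
  show ?case
  proof (cases "n = 0")
    case True then show ?thesis by (simp add: goodL_def ccl_def goodP_triv)
  next
    case False
    define N where "N = Suc n"
    define ps1 where "ps1 = ccl L n"
    define ps2 where "ps2 = map (\<lambda>i. (i, N)) (L N)"
    have LN: "distinct (L N)" "set (L N) = {1..<N}" using Suc.prems False by (auto simp: N_def)
    have ps: "ccl L (Suc n) = ps1 @ ps2"
      using False by (simp add: ccl_def ps1_def ps2_def N_def)
    have g1: "goodL n ps1" using Suc by (simp add: ps1_def)
    have s1: "set ps1 \<subseteq> pairs n" using g1 by (simp add: goodL_def)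
    have pairs_mono: "pairs n \<subseteq> pairs N" by (auto simp: pairs_def N_def)
    have s2: "set ps2 \<subseteq> pairs N" using LN by (auto simp: ps2_def pairs_def)
    have sps: "set (ps1 @ ps2) \<subseteq> pairs N" using s1 s2 pairs_mono by auto
    have vps: "validP N (nth (ps1 @ ps2)) m" if "m \<le> length (ps1 @ ps2)" for m
      unfolding validP_def using sps that by (metis (no_types) less_le_trans nth_mem subsetD)
    have "goodP N (nth (ps1 @ ps2)) (length (ps1 @ ps2))"
      unfolding goodP_def
    proof (intro allI impI)
      fix X \<phi> w assume zo: "zo N X" and zd: "zd X" and ok: "okang \<phi> w"
        and pzM: "pz (nth (ps1 @ ps2)) \<phi> w X (length (ps1 @ ps2))"
      let ?P = "nth (ps1 @ ps2)"
      let ?m = "length ps1"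
      have pzA: "pz ?P \<phi> w X ?m" and
        pzB: "pz (\<lambda>k. ?P (?m + k)) (\<lambda>k. \<phi> (?m + k)) (\<lambda>k. w (?m + k)) (cev ?P \<phi> w X ?m) (length ps2)"
        using pzM pz_add[of ?P \<phi> w X ?m "length ps2"] by auto
      have pz1: "pz (nth ps1) \<phi> w X ?m"
        using pzA by (subst pz_cong[of _ _ ?P]) (auto simp: nth_append)
      have v1: "validP n (nth ps1) k" if "k \<le> length ps1" for k
        unfolding validP_def using s1 that by (metis (no_types) less_le_trans nth_mem subsetD)
      have pz0: "pz (nth ps1) \<phi> w (tq (\<lambda>a. a) n X) ?m"
        unfolding pz_def
      proof (intro allI impI)
        fix k assume k: "k < ?m"
        have "ps1 ! k \<in> pairs n" using s1 k by auto
        then show "cev (nth ps1) \<phi> w (tq (\<lambda>a. a) n X) k (fst (ps1 ! k)) (snd (ps1 ! k)) = 0 \<and>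
          cev (nth ps1) \<phi> w (tq (\<lambda>a. a) n X) k (snd (ps1 ! k)) (fst (ps1 ! k)) = 0"
          using pz1 k cev_tq_id[OF v1[of k]] by (auto simp: pz_def tq_def pairs_def)
      qed
      have "zo n (tq (\<lambda>a. a) n X)" by (auto simp: zo_def tq_def)
      moreover have "zd (tq (\<lambda>a. a) n X)" using zd by (auto simp: zd_def tq_def)
      ultimately have X0: "tq (\<lambda>a. a) n X = (\<lambda>_ _. 0)"
        using g1 pz0 ok unfolding goodL_def goodP_def by blast
      define Xm where "Xm = cev ?P \<phi> w X ?m"
      have Xm1: "Xm = cev (nth ps1) \<phi> w X ?m"
        unfolding Xm_def by (intro cev_cong) (auto simp: nth_append)
      have Xmz: "Xm r s = 0" if "r \<in> {1..n}" "s \<in> {1..n}" for r s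
      proof -
        have z: "tq (\<lambda>a. a) n Xm = (\<lambda>_ _. 0)" using Xm1 cev_tq_id[OF v1[of ?m], of \<phi> w X] X0 cev_zero by simp
        show ?thesis using that fun_cong[OF fun_cong[OF z, of r], of s] by (simp add: tq_def)
      qed
      have vm: "validP N ?P ?m" by (rule vps) simp
      have zoXm: "zo N Xm" using zo_cev[OF vm zo] by (simp add: Xm_def)
      have zdXm: "zd Xm" using zd_cev[OF vm zd pzA] by (simp add: Xm_def)
      define a where "a = (\<lambda>t. if t \<in> {1..n} then Xm t N else 0)"
      define e where "e = (\<lambda>t. if t = N then (1::complex) else 0)"
      define b where "b = (\<lambda>t. if t \<in> {1..n} then cnj (Xm N t) else 0)"
      have Xout: "Xm = outer a e b"
      proof (intro ext)
        fix r s
        show "Xm r s = outer a e b r s"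
        proof (cases "r \<in> {1..N} \<and> s \<in> {1..N}")
          case True
          then have "r \<in> {1..n} \<or> r = N" "s \<in> {1..n} \<or> s = N" by (auto simp: N_def)
          then show ?thesis using Xmz zdXm
            by (auto simp: outer_def a_def b_def e_def N_def zd_def)
        next
          case False
          then show ?thesis using zoXm
            by (auto simp: outer_def a_def b_def e_def N_def zo_def)
        qed
      qed
      have pzC: "pz (\<lambda>k. (L N ! k, N)) (\<lambda>k. \<phi> (?m + k)) (\<lambda>k. w (?m + k)) (outer a e b) (length (L N))"
        using pzB Xout unfolding Xm_def
        by (subst pz_cong[of _ _ "\<lambda>k. ?P (?m + k)"]) (auto simp: nth_append ps2_def)
      have cs: "\<forall>t\<in>set (L N). a t = 0 \<and> b t = 0"
      proof (rule col_stage[OF LN(1)])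
        show "N \<notin> set (L N)" using LN by simp
        show "\<forall>k. cos (\<phi> (?m + k)) \<noteq> 0" using okang_cos[OF ok] by (metis less_irrefl)
        show "\<forall>k. cmod (w (?m + k)) = 1" using ok by (simp add: okang_def)
        show "a N = 0" "b N = 0" "e N \<noteq> 0" by (simp_all add: a_def b_def e_def N_def)
        show "\<forall>t\<in>set (L N). e t = 0" using LN by (simp add: e_def)
        show "pz (\<lambda>k. (L N ! k, N)) (\<lambda>k. \<phi> (?m + k)) (\<lambda>k. w (?m + k)) (outer a e b) (length (L N))"
          by (rule pzC)
      qed
      have "\<forall>t. a t = 0 \<and> b t = 0"
        using cs LN by (auto simp: a_def b_def N_def)
      then have "Xm = (\<lambda>_ _. 0)" using Xout by (auto simp: outer_def)
      then show "X = (\<lambda>_ _. 0)" using cev_zero_imp[OF vm ok] by (simp add: Xm_def)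
    qed
    then show ?thesis using sps ps by (simp add: goodL_def N_def)
  qed
qed

lemma Cc_good: "Ord \<in> C_c n \<Longrightarrow> goodL n Ord"
  unfolding C_c_def using ccl_good by (auto simp: ccl_def)

lemma map_rev_upt: "map (\<lambda>j. Suc n - j) [2..<Suc n] = rev [1..<n]"
proof (rule nth_equalityI)
  show "length (map (\<lambda>j. Suc n - j) [2..<Suc n]) = length (rev [1..<n])" by (simp del: upt_Suc)
next
  fix k assume "k < length (map (\<lambda>j. Suc n - j) [2..<Suc n])"
  then have k: "k < n - 1" by (simp del: upt_Suc)
  then show "map (\<lambda>j. Suc n - j) [2..<Suc n] ! k = rev [1..<n] ! k"
    by (simp add: rev_nth nth_upt del: upt_Suc)
qed

lemma Cr_good:
  assumes "Ord \<in> C_r n" shows "goodL n Ord"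
proof -
  obtain L where L: "\<forall>i\<in>{1..<n}. distinct (L i) \<and> set (L i) = {i<..n}"
    and Ord: "Ord = concat (map (\<lambda>i. map (\<lambda>j. (i, j)) (L i)) (rev [1..<n]))"
    using assms by (auto simp: C_r_def)
  define q where "q = (\<lambda>t::nat. Suc n - t)"
  have qq: "q (q t) = t" if "t \<in> {1..n}" for t using that by (auto simp: q_def)
  have qr: "q t \<in> {1..n}" if "t \<in> {1..n}" for t using that by (auto simp: q_def)
  have bq: "bij_betw q {1..n} {1..n}"
    by (rule bij_betw_byWitness[where f'=q]) (use qq qr in auto)
  define L' where "L' = (\<lambda>j. map q (L (q j)))"
  have L': "\<forall>j\<in>{2..n}. distinct (L' j) \<and> set (L' j) = {1..<j}"
  proof
    fix j assume j: "j \<in> {2..n}"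
    then have qj: "q j \<in> {1..<n}" by (auto simp: q_def)
    have "inj_on q (set (L (q j)))"
      using L qj by (intro inj_on_subset[OF bij_betw_imp_inj_on[OF bq]]) auto
    then have d: "distinct (L' j)" using L qj by (simp add: L'_def distinct_map)
    have "set (L' j) = q ` {q j<..n}" using L qj by (simp add: L'_def)
    also have "\<dots> = {1..<j}"
    proof
      show "q ` {q j<..n} \<subseteq> {1..<j}" using j by (auto simp: q_def)
      show "{1..<j} \<subseteq> q ` {q j<..n}"
      proof
        fix u assume u: "u \<in> {1..<j}"
        then have "q u \<in> {q j<..n}" "q (q u) = u" using j by (auto simp: q_def)
        then show "u \<in> q ` {q j<..n}" by (metis imageI)
      qed
    qed
    finally show "distinct (L' j) \<and> set (L' j) = {1..<j}" using d by simp
  qed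
  have g: "goodL n (ccl L' n)" using ccl_good[OF L'] .
  have "map (pm q) (ccl L' n) = concat (map (\<lambda>j. map (\<lambda>t. (q j, t)) (L (q j))) [2..<Suc n])"
    unfolding ccl_def map_concat map_map
  proof (intro arg_cong[where f=concat] map_cong refl)
    fix j assume "j \<in> set [2..<Suc n]"
    then have j: "j \<in> {2..n}" by auto
    then have qj: "q j \<in> {1..<n}" by (auto simp: q_def)
    show "(map (pm q) \<circ> (\<lambda>j. map (\<lambda>i. (i, j)) (L' j))) j = map (\<lambda>t. (q j, t)) (L (q j))"
      unfolding L'_def comp_def map_map
    proof (intro map_cong refl)
      fix t assume "t \<in> set (L (q j))"
      then have t: "t \<in> {q j<..n}" using L qj by auto
      then have "q (q t) = t" using qq qj by auto
      then show "pm q (q t, j) = (q j, t)" using t by (auto simp: pm_def)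
    qed
  qed
  also have "\<dots> = concat (map (\<lambda>i. map (\<lambda>t. (i, t)) (L i)) (map q [2..<Suc n]))"
    by (simp add: map_map comp_def)
  also have "\<dots> = Ord" using map_rev_upt Ord by (simp add: q_def)
  finally show ?thesis using goodL_perm[OF g bq] by simp
qed

lemma Csp_good: "Ord \<in> C_sp n \<Longrightarrow> goodL n Ord"
  unfolding C_sp_def using Cc_good Cr_good goodL_rev by auto

definition goodrep :: "nat \<Rightarrow> nat \<Rightarrow> (nat \<times> nat) list \<Rightarrow> bool" where
  "goodrep n m Ord \<longleftrightarrow> goodL n (concat (replicate m Ord))"

lemma adm_transp_sym: "adm_transp A B \<Longrightarrow> adm_transp B A"
proof -
  assume "adm_transp A B"
  then obtain k where k: "Suc k < length A"
    "{fst (A ! k), snd (A ! k)} \<inter> {fst (A ! Suc k), snd (A ! Suc k)} = {}"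
    "B = A[k := A ! Suc k, Suc k := A ! k]" by (auto simp: adm_transp_def)
  have l: "length B = length A" using k by simp
  have b1: "B ! k = A ! Suc k" "B ! Suc k = A ! k" using k by (auto simp: nth_list_update)
  have "B[k := B ! Suc k, Suc k := B ! k] = A"
    using k b1 by (auto intro!: nth_equalityI simp: nth_list_update)
  then show "adm_transp B A" unfolding adm_transp_def using k l b1 by (intro exI[of _ k]) auto
qed

lemma adm_transp_set: "adm_transp A B \<Longrightarrow> set B = set A"
  unfolding adm_transp_def by auto

lemma adm_transp_len: "adm_transp A B \<Longrightarrow> length B = length A"
  unfolding adm_transp_def by auto

lemma goodL_swap:
  assumes g: "goodL n (xs @ A @ ys)" and t: "adm_transp A B"
  shows "goodL n (xs @ B @ ys)"
proof -
  obtain k where k: "Suc k < length A"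
    and dj: "{fst (A ! k), snd (A ! k)} \<inter> {fst (A ! Suc k), snd (A ! Suc k)} = {}"
    and B: "B = A[k := A ! Suc k, Suc k := A ! k]" using t by (auto simp: adm_transp_def)
  let ?P = "nth (xs @ A @ ys)"
  define p where "p = length xs + k"
  have s: "set (xs @ A @ ys) \<subseteq> pairs n" using g by (simp add: goodL_def)
  have v: "validP n ?P (length (xs @ A @ ys))"
    unfolding validP_def using s by (metis (no_types) nth_mem subsetD)
  have P1: "?P p = A ! k" "?P (Suc p) = A ! Suc k" using k
    by (auto simp: p_def nth_append)
  have G1: "goodP n (?P(p := ?P (Suc p), Suc p := ?P p)) (length (xs @ A @ ys))"
    using goodP_swap[OF _ v, of p] g k dj P1 by (auto simp: goodL_def p_def)
  have E: "(?P(p := ?P (Suc p), Suc p := ?P p)) i = (xs @ B @ ys) ! i" for i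
  proof -
    have lB: "length B = length A" using B by simp
    have Bk: "B ! k = A ! Suc k" "B ! Suc k = A ! k" using B k by (auto simp: nth_list_update)
    have Bo: "B ! t = A ! t" if "t \<noteq> k" "t \<noteq> Suc k" for t using B that by (auto simp: nth_list_update)
    consider "i = p" | "i = Suc p" | "i \<noteq> p" "i \<noteq> Suc p" by blast
    then show ?thesis
    proof cases
      case 1 then show ?thesis using P1 Bk k lB by (simp add: p_def nth_append)
    next
      case 2 then show ?thesis using P1 Bk k lB by (simp add: p_def nth_append)
    next
      case 3
      then have "(?P(p := ?P (Suc p), Suc p := ?P p)) i = ?P i" by simp
      also have "\<dots> = (xs @ B @ ys) ! i"
      proof (cases "i < length xs")
        case True then show ?thesis by (simp add: nth_append)
      next
        case False
        then have "i - length xs \<noteq> k" "i - length xs \<noteq> Suc k" using 3 by (auto simp: p_def)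
        then show ?thesis using False lB Bo by (simp add: nth_append)
      qed
      finally show ?thesis .
    qed
  qed
  have "goodP n (nth (xs @ B @ ys)) (length (xs @ A @ ys))"
    by (rule goodP_cong[OF _ G1]) (rule E)
  then have "goodP n (nth (xs @ B @ ys)) (length (xs @ B @ ys))"
    using adm_transp_len[OF t] by simp
  moreover have "set (xs @ B @ ys) \<subseteq> pairs n" using s adm_transp_set[OF t] by auto
  ultimately show ?thesis by (simp add: goodL_def)
qed

lemma goodrep_transp_gen:
  "adm_transp A B \<Longrightarrow> goodL n (xs @ concat (replicate m A) @ ys) \<Longrightarrow> goodL n (xs @ concat (replicate m B) @ ys)"
proof (induction m arbitrary: xs)
  case 0 then show ?case by simp
next
  case (Suc m)
  have "goodL n (xs @ A @ (concat (replicate m A) @ ys))" using Suc.prems by simp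
  then have "goodL n (xs @ B @ (concat (replicate m A) @ ys))" using goodL_swap Suc.prems(1) by blast
  then have "goodL n ((xs @ B) @ concat (replicate m A) @ ys)" by simp
  then have "goodL n ((xs @ B) @ concat (replicate m B) @ ys)" using Suc.IH Suc.prems(1) by blast
  then show ?case by simp
qed

lemma goodrep_transp: "adm_transp A B \<Longrightarrow> goodrep n m B \<Longrightarrow> goodrep n m A"
  using goodrep_transp_gen[OF adm_transp_sym, of A B n "[]" m "[]"] by (simp add: goodrep_def)

lemma goodrep_ord_equiv: "ord_equiv A B \<Longrightarrow> goodrep n m B \<Longrightarrow> goodrep n m A"
  unfolding ord_equiv_def
proof (induction rule: converse_rtranclp_induct)
  case base then show ?case .
next
  case (step y z) then show ?case using goodrep_transp by blast
qed

lemma concat_replicate_shift: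
  "concat (replicate (Suc m) (O1 @ O2)) = O1 @ concat (replicate m (O2 @ O1)) @ O2"
  by (induction m) simp_all

lemma goodrep_shift:
  assumes "shift_equiv A B" "goodrep n m B" "m \<ge> 1"
  shows "goodrep n (Suc m) A"
proof -
  obtain O1 O2 where AB: "A = O1 @ O2" "B = O2 @ O1" using assms(1) by (auto simp: shift_equiv_def)
  have "set (concat (replicate m B)) = set B" using assms(3) by (cases m) auto
  then have sB: "set B \<subseteq> pairs n" using assms(2) by (simp add: goodrep_def goodL_def)
  have "goodL n (O1 @ concat (replicate m B) @ O2)"
    using goodL_extend assms(2) sB AB by (auto simp: goodrep_def)
  moreover have "concat (replicate (Suc m) A) = O1 @ concat (replicate m B) @ O2"
    by (simp only: AB concat_replicate_shift)
  ultimately show ?thesis by (simp only: goodrep_def)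
qed

lemma card_chain_count:
  "card {k. Suc k < length cs \<and> \<not> \<tau> k} = length (filter (\<lambda>k. \<not> \<tau> k) [0..<length cs - 1])"
proof -
  have eq: "{k. Suc k < length cs \<and> \<not> \<tau> k} = set (filter (\<lambda>k. \<not> \<tau> k) [0..<length cs - 1])" by auto
  show ?thesis by (simp only: eq distinct_card[OF distinct_filter[OF distinct_upt]])
qed

lemma chain_good:
  "cs \<noteq> [] \<Longrightarrow> (\<forall>k. Suc k < length cs \<longrightarrow> (if \<tau> k then ord_equiv (cs ! k) (cs ! Suc k) else shift_equiv (cs ! k) (cs ! Suc k)))
   \<Longrightarrow> goodrep n m (last cs) \<Longrightarrow> m \<ge> 1
   \<Longrightarrow> goodrep n (m + length (filter (\<lambda>k. \<not> \<tau> k) [0..<length cs - 1])) (hd cs)"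
proof (induction cs arbitrary: \<tau>)
  case Nil then show ?case by simp
next
  case (Cons c cs)
  show ?case
  proof (cases "cs = []")
    case True then show ?thesis using Cons.prems by simp
  next
    case False
    have rel: "\<forall>k. Suc k < length cs \<longrightarrow> (if \<tau> (Suc k) then ord_equiv (cs ! k) (cs ! Suc k) else shift_equiv (cs ! k) (cs ! Suc k))"
      using Cons.prems(2) by auto
    have IH: "goodrep n (m + length (filter (\<lambda>k. \<not> \<tau> (Suc k)) [0..<length cs - 1])) (hd cs)"
      using Cons.IH[OF False rel] Cons.prems(3,4) False by simp
    have r0: "if \<tau> 0 then ord_equiv c (hd cs) else shift_equiv c (hd cs)"
      using Cons.prems(2) False by (auto dest: spec[of _ 0] simp: hd_conv_nth)
    have cnt: "length (filter (\<lambda>k. \<not> \<tau> k) [0..<length (c # cs) - 1]) =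
       (if \<tau> 0 then 0 else 1) + length (filter (\<lambda>k. \<not> \<tau> (Suc k)) [0..<length cs - 1])"
    proof -
      have "[0..<length (c # cs) - 1] = 0 # map Suc [0..<length cs - 1]"
        using False by (simp add: upt_conv_Cons map_Suc_upt)
      then show ?thesis by (simp add: filter_map comp_def)
    qed
    show ?thesis
    proof (cases "\<tau> 0")
      case True
      then show ?thesis using goodrep_ord_equiv r0 IH cnt by simp
    next
      case F: False
      have "m + length (filter (\<lambda>k. \<not> \<tau> (Suc k)) [0..<length cs - 1]) \<ge> 1" using Cons.prems(4) by simp
      then show ?thesis using goodrep_shift r0 IH cnt F by simp
    qed
  qed
qed

lemma chain_set:
  "cs \<noteq> [] \<Longrightarrow> (\<forall>k. Suc k < length cs \<longrightarrow> (if \<tau> k then ord_equiv (cs ! k) (cs ! Suc k) else shift_equiv (cs ! k) (cs ! Suc k)))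
   \<Longrightarrow> set (last cs) = set (hd cs)"
proof (induction cs arbitrary: \<tau>)
  case Nil then show ?case by simp
next
  case (Cons c cs)
  show ?case
  proof (cases "cs = []")
    case True then show ?thesis by simp
  next
    case False
    have rel: "\<forall>k. Suc k < length cs \<longrightarrow> (if \<tau> (Suc k) then ord_equiv (cs ! k) (cs ! Suc k) else shift_equiv (cs ! k) (cs ! Suc k))"
      using Cons.prems(2) by auto
    have r0: "if \<tau> 0 then ord_equiv c (hd cs) else shift_equiv c (hd cs)"
      using Cons.prems(2) False by (auto dest: spec[of _ 0] simp: hd_conv_nth)
    have "set (hd cs) = set c"
    proof (cases "\<tau> 0")
      case True
      then have "adm_transp\<^sup>*\<^sup>* c (hd cs)" using r0 by (simp add: ord_equiv_def)
      then show ?thesis by (induction rule: rtranclp_induct) (auto dest: adm_transp_set)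
    next
      case F: False
      then show ?thesis using r0 by (auto simp: shift_equiv_def)
    qed
    then show ?thesis using Cons.IH[OF False rel] False by simp
  qed
qed

lemma canon_chain_good:
  assumes "canon_chain d A B" "goodrep n 1 B"
  shows "goodrep n (Suc d) A"
proof -
  obtain cs b where cs: "cs \<noteq> []" "hd cs = A" "last cs = B"
    "\<forall>k. Suc k < length cs \<longrightarrow> (if (even k \<longleftrightarrow> b) then ord_equiv (cs ! k) (cs ! Suc k)
           else shift_equiv (cs ! k) (cs ! Suc k))"
    "d = card {k. Suc k < length cs \<and> \<not> (even k \<longleftrightarrow> b)}"
    using assms(1) unfolding canon_chain_def by blast
  have "goodrep n (1 + length (filter (\<lambda>k. \<not> (even k \<longleftrightarrow> b)) [0..<length cs - 1])) (hd cs)"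
    by (rule chain_good[where \<tau>="\<lambda>k. even k \<longleftrightarrow> b"]) (use cs assms(2) in simp_all)
  moreover have "d = length (filter (\<lambda>k. \<not> (even k \<longleftrightarrow> b)) [0..<length cs - 1])"
    using cs(5) card_chain_count[of cs "\<lambda>k. even k \<longleftrightarrow> b"] by simp
  ultimately show ?thesis using cs(2) by simp
qed

lemma canon_chain_set:
  assumes "canon_chain d A B" shows "set B = set A"
proof -
  obtain cs b where cs: "cs \<noteq> []" "hd cs = A" "last cs = B"
    "\<forall>k. Suc k < length cs \<longrightarrow> (if (even k \<longleftrightarrow> b) then ord_equiv (cs ! k) (cs ! Suc k)
           else shift_equiv (cs ! k) (cs ! Suc k))"
    using assms unfolding canon_chain_def by blast
  have "set (last cs) = set (hd cs)"
    by (rule chain_set[where \<tau>="\<lambda>k. even k \<longleftrightarrow> b"]) (use cs in simp_all)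
  then show ?thesis using cs by simp
qed

lemma perm_good_back:
  assumes "perm_equiv n A B" "goodrep n m B" "set A \<subseteq> pairs n"
  shows "goodrep n m A"
proof -
  obtain q where q: "bij_betw q {1..n} {1..n}" "B = map (\<lambda>(i, j). (min (q i) (q j), max (q i) (q j))) A"
    using assms(1) unfolding perm_equiv_def by blast
  have "(\<lambda>(i, j). (min (q i) (q j), max (q i) (q j))) = pm q" by (auto simp: pm_def)
  then have B: "B = map (pm q) A" using q by simp
  have "concat (replicate m B) = map (pm q) (concat (replicate m A))"
    by (simp add: B map_concat map_replicate)
  moreover have "set (concat (replicate m A)) \<subseteq> pairs n" using assms(3) by auto
  ultimately have "goodL n (concat (replicate m A))"
    using goodL_perm_back[OF _ q(1)] assms(2) unfolding goodrep_def by metis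
  then show ?thesis by (simp add: goodrep_def)
qed

lemma main_good:
  assumes ord: "is_ordering n Ord" and sp: "Ord'' \<in> C_sp n"
    and ch: "(perm_equiv n Ord Ord' \<and> canon_chain d Ord' Ord'') \<or>
        (canon_chain d Ord Ord' \<and> perm_equiv n Ord' Ord'')"
  shows "goodrep n (Suc d) Ord"
proof -
  have g1: "goodrep n 1 Ord''" using Csp_good[OF sp] by (simp add: goodrep_def)
  have sO: "set Ord = pairs n" using ord by (simp add: is_ordering_def)
  from ch show ?thesis
  proof
    assume h: "perm_equiv n Ord Ord' \<and> canon_chain d Ord' Ord''"
    then have "goodrep n (Suc d) Ord'" using canon_chain_good[OF _ g1] by blast
    then show ?thesis using perm_good_back[of n Ord Ord'] h sO by blast
  next
    assume h: "canon_chain d Ord Ord' \<and> perm_equiv n Ord' Ord''"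
    then have "set Ord' = pairs n" using canon_chain_set[of d Ord Ord'] sO by blast
    then have "goodrep n 1 Ord'" using perm_good_back[of n Ord' Ord'' 1] h g1 by blast
    then show ?thesis using canon_chain_good[of d Ord Ord'] h by blast
  qed
qed

definition tstep :: "nat \<Rightarrow> nat \<Rightarrow> real \<Rightarrow> complex \<Rightarrow> cmatrix \<Rightarrow> cmatrix" where
  "tstep i j \<phi> w X = (\<lambda>r s. if r = s \<or> (r = i \<and> s = j) \<or> (r = j \<and> s = i) then 0 else conjr i j \<phi> w X r s)"

fun tev :: "(nat \<Rightarrow> nat \<times> nat) \<Rightarrow> (nat \<Rightarrow> real) \<Rightarrow> (nat \<Rightarrow> complex) \<Rightarrow> cmatrix \<Rightarrow> nat \<Rightarrow> cmatrix" where
  "tev P \<phi> w X 0 = X"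
| "tev P \<phi> w X (Suc k) = tstep (fst (P k)) (snd (P k)) (\<phi> k) (w k) (tev P \<phi> w X k)"

definition S2 :: "nat \<Rightarrow> cmatrix \<Rightarrow> real" where
  "S2 n X = (\<Sum>r\<in>{1..n}. \<Sum>s\<in>{1..n}. if r \<noteq> s then (cmod (X r s))\<^sup>2 else 0)"

definition Fr :: "nat \<Rightarrow> cmatrix \<Rightarrow> real" where
  "Fr n X = (\<Sum>r\<in>{1..n}. \<Sum>s\<in>{1..n}. (cmod (X r s))\<^sup>2)"

lemma norm2_rot:
  fixes c s :: real
  assumes "c * c + s * s = 1" "cmod w = 1"
  shows "(cmod (of_real c * a + cnj w * of_real s * b))\<^sup>2 + (cmod (- (w * of_real s * a) + of_real c * b))\<^sup>2
     = (cmod a)\<^sup>2 + (cmod b)\<^sup>2"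
proof -
  have ww: "w * cnj w = 1" using wcnj[OF assms(2)] .
  have cc: "complex_of_real c * complex_of_real c + complex_of_real s * complex_of_real s = 1"
    using assms(1) by (metis of_real_1 of_real_add of_real_mult)
  let ?x = "of_real c * a + cnj w * of_real s * b" and ?y = "- (w * of_real s * a) + of_real c * b"
  have "complex_of_real ((cmod ?x)\<^sup>2 + (cmod ?y)\<^sup>2) = ?x * cnj ?x + ?y * cnj ?y"
    by (simp only: of_real_add complex_norm_square)
  also have "\<dots> = (complex_of_real c * complex_of_real c + (w * cnj w) * (complex_of_real s * complex_of_real s)) * (a * cnj a + b * cnj b)"
    by (simp add: algebra_simps)
  also have "\<dots> = a * cnj a + b * cnj b" using ww cc by simp
  also have "\<dots> = complex_of_real ((cmod a)\<^sup>2 + (cmod b)\<^sup>2)"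
    by (simp only: of_real_add complex_norm_square)
  finally show ?thesis using of_real_eq_iff by blast
qed

lemma sum_two_out:
  assumes "finite R" "i \<in> R" "j \<in> R" "i \<noteq> j" "\<And>t. t \<in> R \<Longrightarrow> t \<noteq> i \<Longrightarrow> t \<noteq> j \<Longrightarrow> f t = g t"
    "f i + f j = g i + (g j :: real)"
  shows "sum f R = sum g R"
proof -
  have "sum f R = f i + (f j + sum f (R - {i} - {j}))"
    using assms by (simp add: sum.remove[of R i] sum.remove[of "R - {i}" j])
  also have "sum f (R - {i} - {j}) = sum g (R - {i} - {j})"
    using assms(5) by (intro sum.cong) auto
  also have "f i + (f j + sum g (R - {i} - {j})) = g i + (g j + sum g (R - {i} - {j}))"
    using assms(6) by simp
  also have "\<dots> = sum g R"
    using assms by (simp add: sum.remove[of R i] sum.remove[of "R - {i}" j])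
  finally show ?thesis .
qed

lemma row_inv:
  assumes "i \<in> {1..n}" "j \<in> {1..n}" "i \<noteq> j" "cmod w = 1"
  shows "(\<Sum>t\<in>{1..n}. (cmod (rmul i j (of_real (cos \<phi>)) (of_real (sin \<phi>)) w X r t))\<^sup>2) = (\<Sum>t\<in>{1..n}. (cmod (X r t))\<^sup>2)"
proof (rule sum_two_out[OF _ assms(1-3)])
  show "(cmod (rmul i j (of_real (cos \<phi>)) (of_real (sin \<phi>)) w X r i))\<^sup>2 + (cmod (rmul i j (of_real (cos \<phi>)) (of_real (sin \<phi>)) w X r j))\<^sup>2 =
     (cmod (X r i))\<^sup>2 + (cmod (X r j))\<^sup>2"
    using norm2_rot[of "cos \<phi>" "sin \<phi>" w "X r i" "X r j"] assms(3,4)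
    by (simp add: rmul_def sin_cos_squared_add3)
qed (auto simp: rmul_def)

lemma col_inv:
  assumes "i \<in> {1..n}" "j \<in> {1..n}" "i \<noteq> j" "cmod w = 1"
  shows "(\<Sum>r\<in>{1..n}. (cmod (lmul i j (of_real (cos \<phi>)) (of_real (sin \<phi>)) w Z r t))\<^sup>2) = (\<Sum>r\<in>{1..n}. (cmod (Z r t))\<^sup>2)"
proof (rule sum_two_out[OF _ assms(1-3)])
  have w: "cmod (cnj w) = 1" using assms(4) by simp
  show "(cmod (lmul i j (of_real (cos \<phi>)) (of_real (sin \<phi>)) w Z i t))\<^sup>2 + (cmod (lmul i j (of_real (cos \<phi>)) (of_real (sin \<phi>)) w Z j t))\<^sup>2 =
     (cmod (Z i t))\<^sup>2 + (cmod (Z j t))\<^sup>2"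
    using norm2_rot[of "cos \<phi>" "sin \<phi>" "cnj w" "Z i t" "Z j t"] assms(3) w
    by (simp add: lmul_def sin_cos_squared_add3)
qed (auto simp: lmul_def)

lemma Fr_conjr:
  assumes "i \<in> {1..n}" "j \<in> {1..n}" "i \<noteq> j" "cmod w = 1"
  shows "Fr n (conjr i j \<phi> w X) = Fr n X"
proof -
  let ?Z = "rmul i j (of_real (cos \<phi>)) (of_real (sin \<phi>)) w X"
  have "Fr n (conjr i j \<phi> w X) = (\<Sum>t\<in>{1..n}. \<Sum>r\<in>{1..n}. (cmod (lmul i j (of_real (cos \<phi>)) (of_real (sin \<phi>)) w ?Z r t))\<^sup>2)"
    unfolding Fr_def conjr_def by (rule sum.swap)
  also have "\<dots> = (\<Sum>t\<in>{1..n}. \<Sum>r\<in>{1..n}. (cmod (?Z r t))\<^sup>2)"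
    using col_inv[OF assms] by simp
  also have "\<dots> = (\<Sum>r\<in>{1..n}. \<Sum>t\<in>{1..n}. (cmod (?Z r t))\<^sup>2)" by (rule sum.swap)
  also have "\<dots> = Fr n X" unfolding Fr_def using row_inv[OF assms] by simp
  finally show ?thesis .
qed

lemma sum_block:
  fixes n :: nat
  assumes "i \<in> {1..n}" "j \<in> {1..n}" "i \<noteq> j"
    "\<And>r s. \<not> ((r = i \<or> r = j) \<and> (s = i \<or> s = j)) \<Longrightarrow> f r s = (0::real)"
  shows "(\<Sum>r\<in>{1..n}. \<Sum>s\<in>{1..n}. f r s) = f i i + f i j + f j i + f j j"
proof -
  have inner: "(\<Sum>s\<in>{1..n}. f r s) = (if r = i \<or> r = j then f r i + f r j else 0)" for r
  proof (cases "r = i \<or> r = j")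
    case True
    have "(\<Sum>s\<in>{1..n}. f r s) = (\<Sum>s\<in>{i, j}. f r s)"
      using assms True by (intro sum.mono_neutral_right) auto
    then show ?thesis using True assms(3) by simp
  next
    case False then show ?thesis using assms(4) by simp
  qed
  have "(\<Sum>r\<in>{1..n}. \<Sum>s\<in>{1..n}. f r s) = (\<Sum>r\<in>{1..n}. (if r = i \<or> r = j then f r i + f r j else 0))"
    using inner by simp
  also have "\<dots> = (\<Sum>r\<in>{i, j}. (if r = i \<or> r = j then f r i + f r j else 0))"
    using assms by (intro sum.mono_neutral_right) auto
  finally show ?thesis using assms(3) by simp
qed

lemma S2_Fr: "zd X \<Longrightarrow> S2 n X = Fr n X"
  unfolding S2_def Fr_def zd_def by (intro sum.cong refl) auto

definition blk :: "nat \<Rightarrow> nat \<Rightarrow> cmatrix \<Rightarrow> cmatrix" where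
  "blk i j X = (\<lambda>r s. if (r = i \<or> r = j) \<and> (s = i \<or> s = j) then X r s else 0)"

lemma conjr_blk:
  assumes "i \<noteq> j"
  shows "conjr i j \<phi> w (blk i j X) = blk i j (conjr i j \<phi> w X)"
  using assms by (intro ext) (auto simp: conjr_def lmul_def rmul_def blk_def)

lemma tstep_S2:
  assumes "i \<in> {1..n}" "j \<in> {1..n}" "i \<noteq> j" "cmod w = 1" "zd X"
  shows "S2 n (tstep i j \<phi> w X) = S2 n X - (cmod (X i j))\<^sup>2 - (cmod (X j i))\<^sup>2"
proof -
  let ?C = "conjr i j \<phi> w X"
  have zdt: "zd (tstep i j \<phi> w X)" by (simp add: zd_def tstep_def)
  have Cd: "?C r r = 0" if "r \<noteq> i" "r \<noteq> j" for r
    using conjr_unchanged[OF that that] assms(5) by (simp add: zd_def)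
  have "Fr n ?C = Fr n (tstep i j \<phi> w X) + (\<Sum>r\<in>{1..n}. \<Sum>s\<in>{1..n}.
      (if (r = i \<or> r = j) \<and> (s = i \<or> s = j) then (cmod (?C r s))\<^sup>2 else 0))"
    unfolding Fr_def sum.distrib[symmetric]
    by (intro sum.cong refl) (auto simp: tstep_def Cd)
  also have "(\<Sum>r\<in>{1..n}. \<Sum>s\<in>{1..n}. (if (r = i \<or> r = j) \<and> (s = i \<or> s = j) then (cmod (?C r s))\<^sup>2 else 0))
      = Fr n (blk i j ?C)"
    unfolding Fr_def blk_def by (intro sum.cong refl) auto
  also have "\<dots> = Fr n (blk i j X)" using Fr_conjr[OF assms(1-4)] conjr_blk[OF assms(3)] by metis
  also have "\<dots> = (cmod (X i j))\<^sup>2 + (cmod (X j i))\<^sup>2"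
    unfolding Fr_def
    by (subst sum_block[OF assms(1-3)]) (use assms(3,5) in \<open>auto simp: blk_def zd_def\<close>)
  finally have "Fr n ?C = Fr n (tstep i j \<phi> w X) + ((cmod (X i j))\<^sup>2 + (cmod (X j i))\<^sup>2)" .
  moreover have "Fr n ?C = S2 n X" using Fr_conjr[OF assms(1-4)] S2_Fr[OF assms(5)] by simp
  ultimately show ?thesis using S2_Fr[OF zdt] by simp
qed

lemma S2_nonneg: "S2 n X \<ge> 0"
  unfolding S2_def by (intro sum_nonneg) auto

lemma zd_tstep: "zd (tstep i j \<phi> w X)" by (simp add: zd_def tstep_def)

lemma zo_tstep: "i \<in> {1..n} \<Longrightarrow> j \<in> {1..n} \<Longrightarrow> zo n X \<Longrightarrow> zo n (tstep i j \<phi> w X)"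
  using zo_conjr[of i n j X \<phi> w] by (auto simp: zo_def tstep_def)

lemma zo_tev: "validP n P k \<Longrightarrow> zo n X \<Longrightarrow> zo n (tev P \<phi> w X k)"
proof (induction k)
  case (Suc k)
  then have "P k \<in> pairs n" "validP n P k" by (auto simp: validP_def)
  then show ?case using Suc zo_tstep pairs_range by simp
qed simp

lemma zd_tev: "zd X \<Longrightarrow> zd (tev P \<phi> w X k)"
  by (cases k) (simp_all add: zd_tstep)

lemma S2_tev_Suc:
  assumes "validP n P (Suc k)" "okang \<phi> w" "zd X"
  shows "S2 n (tev P \<phi> w X (Suc k)) = S2 n (tev P \<phi> w X k)
     - (cmod (tev P \<phi> w X k (fst (P k)) (snd (P k))))\<^sup>2 - (cmod (tev P \<phi> w X k (snd (P k)) (fst (P k))))\<^sup>2"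
proof -
  have p: "P k \<in> pairs n" using assms(1) by (simp add: validP_def)
  have "cmod (w k) = 1" using assms(2) by (simp add: okang_def)
  then show ?thesis
    using tstep_S2[of "fst (P k)" n "snd (P k)" "w k" "tev P \<phi> w X k" "\<phi> k"] pairs_range[OF p] pairs_ne[OF p]
      zd_tev[OF assms(3)] by simp
qed

definition pdec :: "(nat \<Rightarrow> nat \<times> nat) \<Rightarrow> (nat \<Rightarrow> real) \<Rightarrow> (nat \<Rightarrow> complex) \<Rightarrow> cmatrix \<Rightarrow> nat \<Rightarrow> real" where
  "pdec P \<phi> w X k = (cmod (tev P \<phi> w X k (fst (P k)) (snd (P k))))\<^sup>2 + (cmod (tev P \<phi> w X k (snd (P k)) (fst (P k))))\<^sup>2"

lemma S2_tev_sum: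
  assumes "validP n P k" "okang \<phi> w" "zd X"
  shows "S2 n (tev P \<phi> w X k) = S2 n X - (\<Sum>t<k. pdec P \<phi> w X t)"
  using assms
proof (induction k)
  case (Suc k)
  then have "validP n P k" by (auto simp: validP_def)
  then show ?case using Suc S2_tev_Suc[OF Suc.prems] by (simp add: pdec_def)
qed simp

lemma pdec_nonneg: "pdec P \<phi> w X k \<ge> 0" by (simp add: pdec_def)

lemma S2_tev_mono:
  assumes "validP n P k'" "okang \<phi> w" "zd X" "k \<le> k'"
  shows "S2 n (tev P \<phi> w X k') \<le> S2 n (tev P \<phi> w X k)"
proof -
  have v: "validP n P k" using assms(1,4) by (auto simp: validP_def)
  have "(\<Sum>t<k. pdec P \<phi> w X t) \<le> (\<Sum>t<k'. pdec P \<phi> w X t)"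
    using assms(4) by (intro sum_mono2) (auto simp: pdec_nonneg)
  then show ?thesis using S2_tev_sum[OF assms(1-3)] S2_tev_sum[OF v assms(2,3)] by simp
qed

lemma tstep_eq_conjr:
  assumes "i \<noteq> j" "zd X" "X i j = 0" "X j i = 0"
  shows "tstep i j \<phi> w X = conjr i j \<phi> w X"
proof (intro ext)
  fix r s
  have d: "X i i = 0" "X j j = 0" using assms(2) by (auto simp: zd_def)
  note b = conjr_block_zero[OF assms(1) d assms(3,4), of \<phi> w]
  consider "r = s" "r = i \<or> r = j" | "r = s" "r \<noteq> i" "r \<noteq> j" | "r = i" "s = j" | "r = j" "s = i"
    | "r \<noteq> s" "\<not> (r = i \<and> s = j)" "\<not> (r = j \<and> s = i)" by blast
  then show "tstep i j \<phi> w X r s = conjr i j \<phi> w X r s"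
  proof cases
    case 1 then show ?thesis using b by (auto simp: tstep_def)
  next
    case 2 then show ?thesis using conjr_unchanged[of r i j r \<phi> w X] assms(2) by (simp add: tstep_def zd_def)
  next
    case 3 then show ?thesis using b by (simp add: tstep_def)
  next
    case 4 then show ?thesis using b by (simp add: tstep_def)
  next
    case 5 then show ?thesis unfolding tstep_def by auto
  qed
qed

lemma tev_eq_cev:
  assumes "validP n P M" "zd X" "\<forall>t<M. pdec P \<phi> w X t = 0"
  shows "k \<le> M \<Longrightarrow> tev P \<phi> w X k = cev P \<phi> w X k"
proof (induction k)
  case (Suc k)
  have p: "P k \<in> pairs n" using assms(1) Suc.prems by (simp add: validP_def)
  have z: "tev P \<phi> w X k (fst (P k)) (snd (P k)) = 0" "tev P \<phi> w X k (snd (P k)) (fst (P k)) = 0"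
    using assms(3) Suc.prems by (auto simp: pdec_def add_nonneg_eq_0_iff)
  show ?case
    using tstep_eq_conjr[OF pairs_ne[OF p] zd_tev[OF assms(2)] z] Suc by simp
qed simp

lemma S2_eq_imp_pz:
  assumes "validP n P M" "okang \<phi> w" "zd X" "S2 n (tev P \<phi> w X M) \<ge> S2 n X"
  shows "pz P \<phi> w X M"
proof -
  have "(\<Sum>t<M. pdec P \<phi> w X t) \<le> 0" using S2_tev_sum[OF assms(1-3)] assms(4) by simp
  then have "(\<Sum>t<M. pdec P \<phi> w X t) = 0" using sum_nonneg[of "{..<M}" "pdec P \<phi> w X"] pdec_nonneg by force
  then have a: "\<forall>t<M. pdec P \<phi> w X t = 0" using sum_nonneg_eq_0_iff[of "{..<M}" "pdec P \<phi> w X"] pdec_nonneg by auto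
  show ?thesis unfolding pz_def
  proof (intro allI impI)
    fix k assume k: "k < M"
    have "tev P \<phi> w X k = cev P \<phi> w X k" using tev_eq_cev[OF assms(1,3) a] k by simp
    then show "cev P \<phi> w X k (fst (P k)) (snd (P k)) = 0 \<and> cev P \<phi> w X k (snd (P k)) (fst (P k)) = 0"
      using a k by (auto simp: pdec_def add_nonneg_eq_0_iff)
  qed
qed

lemma tstep_scale: "tstep i j \<phi> w (\<lambda>r s. a * X r s) = (\<lambda>r s. a * tstep i j \<phi> w X r s)"
  by (intro ext) (simp add: tstep_def conjr_scale)

lemma tev_scale: "tev P \<phi> w (\<lambda>r s. a * X r s) k = (\<lambda>r s. a * tev P \<phi> w X k r s)"
  by (induction k) (simp_all add: tstep_scale)

lemma S2_scale: "S2 n (\<lambda>r s. a * X r s) = (cmod a)\<^sup>2 * S2 n X"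
  unfolding S2_def sum_distrib_left by (intro sum.cong refl) (simp add: norm_mult power_mult_distrib)

lemma entry_le_S2:
  assumes "r \<in> {1..n}" "s \<in> {1..n}" "r \<noteq> s"
  shows "(cmod (X r s))\<^sup>2 \<le> S2 n X"
proof -
  have "(cmod (X r s))\<^sup>2 = (if r \<noteq> s then (cmod (X r s))\<^sup>2 else 0)" using assms by simp
  also have "\<dots> \<le> (\<Sum>s\<in>{1..n}. if r \<noteq> s then (cmod (X r s))\<^sup>2 else 0)"
    using assms by (intro member_le_sum) auto
  also have "\<dots> \<le> S2 n X" unfolding S2_def
    using assms by (intro member_le_sum) (auto intro: sum_nonneg)
  finally show ?thesis .
qed

lemma cont_if_const: "continuous_on S f \<Longrightarrow> continuous_on S g \<Longrightarrow> continuous_on S (\<lambda>x. if b then f x else g x)"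
  by (cases b) auto

type_synonym param = "cmatrix \<times> (nat \<Rightarrow> real) \<times> (nat \<Rightarrow> complex)"

lemma contX: "continuous_on UNIV (\<lambda>p::param. fst p r s)"
proof -
  have c: "continuous_on UNIV (\<lambda>p::param. fst p)" by (intro continuous_intros)
  have "continuous_on UNIV (\<lambda>p::param. fst p r)"
    by (rule continuous_on_product_then_coordinatewise[OF c])
  then show ?thesis by (rule continuous_on_product_then_coordinatewise)
qed

lemma contP: "continuous_on UNIV (\<lambda>p::param. fst (snd p) k)"
proof -
  have c: "continuous_on UNIV (\<lambda>p::param. fst (snd p))" by (intro continuous_intros)
  then show ?thesis by (rule continuous_on_product_then_coordinatewise)
qed

lemma contW: "continuous_on UNIV (\<lambda>p::param. snd (snd p) k)"
proof -
  have c: "continuous_on UNIV (\<lambda>p::param. snd (snd p))" by (intro continuous_intros)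
  then show ?thesis by (rule continuous_on_product_then_coordinatewise)
qed

lemma cont_rmul:
  assumes "\<And>a b. continuous_on S (\<lambda>p. Y p a b)" "continuous_on S c" "continuous_on S sn" "continuous_on S ww"
  shows "continuous_on S (\<lambda>p. rmul i j (c p) (sn p) (ww p) (Y p) r t)"
proof -
  consider "t = i" | "t \<noteq> i" "t = j" | "t \<noteq> i" "t \<noteq> j" by blast
  then show ?thesis
  proof cases
    case 1 then show ?thesis unfolding rmul_def using assms by (simp, intro continuous_intros) auto
  next
    case 2 then show ?thesis unfolding rmul_def using assms by (simp, intro continuous_intros) auto
  next
    case 3 then show ?thesis unfolding rmul_def using assms by simp
  qed
qed

lemma cont_lmul:
  assumes "\<And>a b. continuous_on S (\<lambda>p. Y p a b)" "continuous_on S c" "continuous_on S sn" "continuous_on S ww"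
  shows "continuous_on S (\<lambda>p. lmul i j (c p) (sn p) (ww p) (Y p) r t)"
proof -
  consider "r = i" | "r \<noteq> i" "r = j" | "r \<noteq> i" "r \<noteq> j" by blast
  then show ?thesis
  proof cases
    case 1 then show ?thesis unfolding lmul_def using assms by (simp, intro continuous_intros) auto
  next
    case 2 then show ?thesis unfolding lmul_def using assms by (simp, intro continuous_intros) auto
  next
    case 3 then show ?thesis unfolding lmul_def using assms by simp
  qed
qed

lemma cont_conjr:
  assumes "\<And>a b. continuous_on S (\<lambda>p. Y p a b)" "continuous_on S ph" "continuous_on S ww"
  shows "continuous_on S (\<lambda>p. conjr i j (ph p) (ww p) (Y p) r t)"
proof -
  have cc: "continuous_on (ph ` S) cos" "continuous_on (ph ` S) sin"
    by (auto intro!: continuous_intros continuous_on_subset[of UNIV])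
  have "continuous_on S (cos \<circ> ph)" "continuous_on S (sin \<circ> ph)"
    using continuous_on_compose[OF assms(2) cc(1)] continuous_on_compose[OF assms(2) cc(2)] by auto
  then have c: "continuous_on S (\<lambda>p. complex_of_real (cos (ph p)))" "continuous_on S (\<lambda>p. complex_of_real (sin (ph p)))"
    by (auto intro!: continuous_on_of_real simp: comp_def)
  show ?thesis unfolding conjr_def
    by (rule cont_lmul[OF cont_rmul[OF assms(1) c assms(3)] c assms(3)])
qed

lemma cont_tev: "continuous_on UNIV (\<lambda>p::param. tev P (fst (snd p)) (snd (snd p)) (fst p) k r s)"
proof (induction k arbitrary: r s)
  case 0 then show ?case using contX by simp
next
  case (Suc k)
  have "continuous_on UNIV (\<lambda>p::param. conjr (fst (P k)) (snd (P k)) (fst (snd p) k) (snd (snd p) k) (tev P (fst (snd p)) (snd (snd p)) (fst p) k) r s)"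
    by (rule cont_conjr[OF Suc contP contW])
  then show ?case
    unfolding tev.simps tstep_def by (rule cont_if_const[OF continuous_on_const])
qed

lemma cont_F: "continuous_on UNIV (\<lambda>p::param. S2 n (tev P (fst (snd p)) (snd (snd p)) (fst p) M))"
  unfolding S2_def by (intro continuous_on_sum cont_if_const continuous_on_const continuous_on_power continuous_on_norm cont_tev)

lemma compact_PiE_UNIV:
  assumes "\<And>i. compact (S i)"
  shows "compact (PiE UNIV S :: ('a \<Rightarrow> 'b::topological_space) set)"
proof -
  have "compactin (product_topology (\<lambda>i. euclidean) UNIV) (PiE UNIV S)"
    using assms by (simp add: compactin_PiE)
  then show ?thesis by (simp add: euclidean_product_topology)
qed

lemma cont_S2_fst: "continuous_on UNIV (\<lambda>p::param. S2 n (fst p))"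
  unfolding S2_def by (intro continuous_on_sum cont_if_const continuous_on_const continuous_on_power continuous_on_norm contX)

lemma compact_K:
  "compact {p::param. zo n (fst p) \<and> zd (fst p) \<and> S2 n (fst p) = 1 \<and> okang (fst (snd p)) (snd (snd p))}"
  (is "compact ?K")
proof -
  define Bx where "Bx = (PiE UNIV (\<lambda>r. PiE UNIV (\<lambda>s. cball (0::complex) 1)) :: cmatrix set)"
  define Bp where "Bp = (PiE UNIV (\<lambda>k. {-(pi/4)..pi/4}) :: (nat \<Rightarrow> real) set)"
  define Bw where "Bw = (PiE UNIV (\<lambda>k. cball (0::complex) 1) :: (nat \<Rightarrow> complex) set)"
  have cB: "compact (Bx \<times> (Bp \<times> Bw))"
    unfolding Bx_def Bp_def Bw_def
    by (intro compact_Times compact_PiE_UNIV compact_cball compact_Icc)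
  define C where "C = {p::param. (\<forall>r s. (if r \<in> {1..n} \<and> s \<in> {1..n} then 0 else fst p r s) = 0) \<and>
     (\<forall>r. fst p r r = 0) \<and> S2 n (fst p) = 1 \<and> (\<forall>k. cmod (snd (snd p) k) = 1)}"
  have clC: "closed C"
    unfolding C_def
    by (intro closed_Collect_conj closed_Collect_all closed_Collect_eq cont_if_const continuous_on_const contX
        cont_S2_fst continuous_on_norm contW)
  have "?K = (Bx \<times> (Bp \<times> Bw)) \<inter> C"
  proof (intro equalityI subsetI)
    fix p assume pK: "p \<in> ?K"
    obtain X ph w where p: "p = (X, ph, w)" by (cases p) auto
    have zo: "zo n X" and zd: "zd X" and S: "S2 n X = 1" and ok: "okang ph w" using pK p by auto
    have "X r s \<in> cball 0 1" for r s
    proof (cases "r \<in> {1..n} \<and> s \<in> {1..n} \<and> r \<noteq> s")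
      case True
      then have "(cmod (X r s))\<^sup>2 \<le> 1" using entry_le_S2[of r n s X] S by auto
      then have "cmod (X r s) \<le> 1" by (simp add: power_le_one_iff)
      then show ?thesis by simp
    next
      case False
      then have "X r s = 0" using zo zd by (auto simp: zo_def zd_def)
      then show ?thesis by simp
    qed
    then have "X \<in> Bx" by (simp add: Bx_def PiE_iff)
    moreover have "ph \<in> Bp"
    proof -
      have "ph k \<in> {-(pi/4)..pi/4}" for k
      proof -
        have "\<bar>ph k\<bar> \<le> pi / 4" using ok by (simp add: okang_def)
        then show ?thesis by (simp add: abs_le_iff) linarith
      qed
      then show ?thesis by (simp add: Bp_def PiE_iff)
    qed
    moreover have "w \<in> Bw" using ok by (auto simp: Bw_def PiE_iff okang_def)
    moreover have "p \<in> C" using zo zd S ok p by (auto simp: C_def zo_def zd_def okang_def)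
    ultimately show "p \<in> (Bx \<times> (Bp \<times> Bw)) \<inter> C" using p by simp
  next
    fix p assume pB: "p \<in> (Bx \<times> (Bp \<times> Bw)) \<inter> C"
    obtain X ph w where p: "p = (X, ph, w)" by (cases p) auto
    have "zo n X" using pB p by (auto simp: C_def zo_def split: if_splits)
    moreover have "zd X" using pB p by (auto simp: C_def zd_def)
    moreover have "S2 n X = 1" using pB p by (auto simp: C_def)
    moreover have "okang ph w"
    proof -
      have "\<bar>ph k\<bar> \<le> pi / 4" for k
      proof -
        have "ph k \<in> {-(pi/4)..pi/4}" using pB p by (auto simp: Bp_def PiE_iff)
        then have a: "-(pi/4) \<le> ph k" "ph k \<le> pi/4" by auto
        show ?thesis unfolding abs_le_iff using a by linarith
      qed
      moreover have "cmod (w k) = 1" for k using pB p by (auto simp: C_def)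
      ultimately show ?thesis by (simp add: okang_def)
    qed
    ultimately show "p \<in> ?K" using p by simp
  qed
  then show ?thesis using compact_Int_closed[OF cB clC] by simp
qed

lemma compact_bound:
  assumes g: "goodP n P M" and v: "validP n P M"
  shows "\<exists>\<gamma>. 0 \<le> \<gamma> \<and> \<gamma> < 1 \<and> (\<forall>X \<phi> w. zo n X \<longrightarrow> zd X \<longrightarrow> okang \<phi> w \<longrightarrow>
     S2 n (tev P \<phi> w X M) \<le> \<gamma> * S2 n X)"
proof -
  define K where "K = {p::param. zo n (fst p) \<and> zd (fst p) \<and> S2 n (fst p) = 1 \<and> okang (fst (snd p)) (snd (snd p))}"
  define F where "F = (\<lambda>p::param. S2 n (tev P (fst (snd p)) (snd (snd p)) (fst p) M))"
  have cK: "compact K" unfolding K_def by (rule compact_K)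
  have cF: "continuous_on K F" unfolding F_def by (rule continuous_on_subset[OF cont_F]) simp
  have Flt: "F p < 1" if "p \<in> K" for p
  proof (rule ccontr)
    assume "\<not> F p < 1"
    obtain X ph w where p: "p = (X, ph, w)" by (cases p) auto
    have zo: "zo n X" and zd: "zd X" and S: "S2 n X = 1" and ok: "okang ph w" using that p by (auto simp: K_def)
    have "S2 n (tev P ph w X M) \<ge> S2 n X" using \<open>\<not> F p < 1\<close> S p by (simp add: F_def)
    then have "pz P ph w X M" using S2_eq_imp_pz[OF v ok zd] by simp
    then have "X = (\<lambda>_ _. 0)" using g zo zd ok unfolding goodP_def by blast
    moreover have "S2 n (\<lambda>_ _. 0) = 0" unfolding S2_def by (intro sum.neutral ballI) simp
    ultimately show False using S by simp
  qed
  obtain \<gamma> where g0: "0 \<le> \<gamma>" and g1: "\<gamma> < 1" and gK: "\<forall>p\<in>K. F p \<le> \<gamma>"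
  proof (cases "K = {}")
    case True then show ?thesis using that[of 0] by simp
  next
    case False
    obtain p0 where p0: "p0 \<in> K" "\<forall>p\<in>K. F p \<le> F p0"
      using continuous_attains_sup[OF cK False cF] by blast
    have "0 \<le> F p0" by (simp add: F_def S2_nonneg)
    then show ?thesis using that[of "F p0"] p0 Flt by blast
  qed
  have "\<forall>X \<phi> w. zo n X \<longrightarrow> zd X \<longrightarrow> okang \<phi> w \<longrightarrow> S2 n (tev P \<phi> w X M) \<le> \<gamma> * S2 n X"
  proof (intro allI impI)
    fix X \<phi> w assume zo: "zo n X" and zd: "zd X" and ok: "okang \<phi> w"
    have mono: "S2 n (tev P \<phi> w X M) \<le> S2 n X"
      using S2_tev_mono[OF v ok zd, of 0] by simp
    show "S2 n (tev P \<phi> w X M) \<le> \<gamma> * S2 n X"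
    proof (cases "S2 n X = 0")
      case True then show ?thesis using mono by simp
    next
      case False
      then have pos: "S2 n X > 0" using S2_nonneg[of n X] by simp
      define a where "a = complex_of_real (1 / sqrt (S2 n X))"
      have "cmod a = 1 / sqrt (S2 n X)" using pos by (simp add: a_def norm_divide)
      then have ca: "(cmod a)\<^sup>2 = 1 / S2 n X" using pos by (simp add: power_divide)
      define X' where "X' = (\<lambda>r s. a * X r s)"
      have "S2 n X' = 1" using ca pos by (simp add: X'_def S2_scale)
      moreover have "zo n X'" using zo by (simp add: zo_def X'_def)
      moreover have "zd X'" using zd by (simp add: zd_def X'_def)
      ultimately have "(X', \<phi>, w) \<in> K" using ok by (simp add: K_def)
      then have "F (X', \<phi>, w) \<le> \<gamma>" using gK by blast
      then have "(cmod a)\<^sup>2 * S2 n (tev P \<phi> w X M) \<le> \<gamma>"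
        by (simp add: F_def X'_def tev_scale S2_scale)
      then have "S2 n (tev P \<phi> w X M) / S2 n X \<le> \<gamma>" using ca by simp
      then show ?thesis using pos by (simp add: divide_le_eq mult.commute)
    qed
  qed
  then show ?thesis using g0 g1 by blast
qed

lemma herm_conj:
  assumes h: "hermitian n X"
  shows "hermitian n (mmul n (Defs.adjoint U) (mmul n X U))"
  unfolding hermitian_def
proof (intro ballI)
  fix r s assume r: "r \<in> {1..n}" and s: "s \<in> {1..n}"
  let ?Y = "mmul n (Defs.adjoint U) (mmul n X U)"
  have e1: "?Y s r = (\<Sum>k\<in>{1..n}. \<Sum>l\<in>{1..n}. cnj (U k s) * X k l * U l r)"
    by (simp only: mmul_def Defs.adjoint_def sum_distrib_left mult.assoc)
  have "cnj (?Y r s) = (\<Sum>k\<in>{1..n}. \<Sum>l\<in>{1..n}. U k r * cnj (X k l) * cnj (U l s))"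
    by (simp only: mmul_def Defs.adjoint_def cnj_sum complex_cnj_mult complex_cnj_cnj sum_distrib_left mult.assoc)
  also have "\<dots> = (\<Sum>k\<in>{1..n}. \<Sum>l\<in>{1..n}. cnj (U l s) * X l k * U k r)"
  proof (intro sum.cong refl)
    fix k l assume k: "k \<in> {1..n}" and l: "l \<in> {1..n}"
    have "X l k = cnj (X k l)" using h k l unfolding hermitian_def by blast
    then have "cnj (X k l) = X l k" by simp
    then show "U k r * cnj (X k l) * cnj (U l s) = cnj (U l s) * X l k * U k r"
      by (simp only: mult.commute mult.left_commute)
  qed
  also have "\<dots> = (\<Sum>l\<in>{1..n}. \<Sum>k\<in>{1..n}. cnj (U l s) * X l k * U k r)"
    by (rule sum.swap)
  finally show "?Y s r = cnj (?Y r s)" using e1 by simp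
qed

definition offd :: "nat \<Rightarrow> cmatrix \<Rightarrow> cmatrix" where
  "offd n X = (\<lambda>r s. if r \<in> {1..n} \<and> s \<in> {1..n} \<and> r \<noteq> s then X r s else 0)"

lemma zo_offd: "zo n (offd n X)" by (auto simp: zo_def offd_def)
lemma zd_offd: "zd (offd n X)" by (auto simp: zd_def offd_def)

lemma conjr_offd:
  assumes "r \<in> {1..n}" "s \<in> {1..n}" "r \<noteq> s" "\<not> (r = i \<and> s = j)" "\<not> (r = j \<and> s = i)"
    "i \<in> {1..n}" "j \<in> {1..n}" "i \<noteq> j"
  shows "conjr i j \<phi> w X r s = conjr i j \<phi> w (offd n X) r s"
  using assms by (auto simp: conjr_def lmul_def rmul_def offd_def)

lemma S2_offd: "S2 n (offd n X) = (offS n X)\<^sup>2"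
proof -
  have "S2 n (offd n X) = (\<Sum>r\<in>{1..n}. \<Sum>s\<in>{1..n}. if r \<noteq> s then (cmod (X r s))\<^sup>2 else 0)"
    unfolding S2_def offd_def by (intro sum.cong refl) auto
  moreover have "(\<Sum>r\<in>{1..n}. \<Sum>s\<in>{1..n}. if r \<noteq> s then (cmod (X r s))\<^sup>2 else 0) \<ge> 0"
    by (intro sum_nonneg) auto
  ultimately show ?thesis unfolding offS_def by simp
qed

lemma run_herm:
  assumes "jacobi_run n Ord A Aseq \<phi> \<alpha>" "hermitian n A"
  shows "hermitian n (Aseq k)"
proof (induction k)
  case 0 then show ?case using assms by (simp add: jacobi_run_def)
next
  case (Suc k)
  obtain U where "Aseq (Suc k) = mmul n (Defs.adjoint U) (mmul n (Aseq k) U)"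
    using assms(1) unfolding jacobi_run_def Let_def by blast
  then show ?case using herm_conj[OF Suc.IH] by simp
qed

lemma run_offd:
  assumes run: "jacobi_run n Ord A Aseq \<phi> \<alpha>" and h: "hermitian n A" and s: "set Ord \<subseteq> pairs n"
    and ne: "Ord \<noteq> []"
  shows "offd n (Aseq k) = tev (\<lambda>k. Ord ! (k mod length Ord)) \<phi> (\<lambda>k. exp (\<i> * of_real (\<alpha> k))) (offd n A) k"
proof (induction k)
  case 0 then show ?case using run by (simp add: jacobi_run_def)
next
  case (Suc k)
  define i where "i = fst (Ord ! (k mod length Ord))"
  define j where "j = snd (Ord ! (k mod length Ord))"
  have "Ord ! (k mod length Ord) \<in> set Ord" using ne by simp
  then have pij: "(i, j) \<in> pairs n" using s by (auto simp: i_def j_def)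
  then have ij: "i \<in> {1..n}" "j \<in> {1..n}" "i \<noteq> j" by (auto simp: pairs_def)
  have sk: "Aseq (Suc k) = mmul n (Defs.adjoint (rot i j (\<phi> k) (\<alpha> k))) (mmul n (Aseq k) (rot i j (\<phi> k) (\<alpha> k))) \<and> Aseq (Suc k) i j = 0"
    using spec[OF jacobi_run_def[THEN iffD1, OF run, THEN conjunct2], of k] unfolding Let_def i_def j_def .
  have step: "Aseq (Suc k) = mmul n (Defs.adjoint (rot i j (\<phi> k) (\<alpha> k))) (mmul n (Aseq k) (rot i j (\<phi> k) (\<alpha> k)))"
    and z: "Aseq (Suc k) i j = 0" using sk by blast+
  have hS: "hermitian n (Aseq (Suc k))" using run_herm[OF run h] .
  have "Aseq (Suc k) j i = cnj (Aseq (Suc k) i j)" using hS ij unfolding hermitian_def by blast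
  then have z2: "Aseq (Suc k) j i = 0" using z by simp
  let ?w = "exp (\<i> * complex_of_real (\<alpha> k))"
  have "offd n (Aseq (Suc k)) r t = tstep i j (\<phi> k) ?w (offd n (Aseq k)) r t" for r t
  proof (cases "r \<in> {1..n} \<and> t \<in> {1..n}")
    case False
    have "zo n (conjr i j (\<phi> k) ?w (offd n (Aseq k)))" using zo_conjr[OF ij(1,2) zo_offd] .
    have "offd n (Aseq (Suc k)) r t = 0" using False by (auto simp: offd_def)
    moreover have "tstep i j (\<phi> k) ?w (offd n (Aseq k)) r t = 0"
      using False \<open>zo n (conjr i j (\<phi> k) ?w (offd n (Aseq k)))\<close> unfolding tstep_def zo_def by auto
    ultimately show ?thesis by simp
  next
    case True
    show ?thesis
    proof (cases "r = t \<or> (r = i \<and> t = j) \<or> (r = j \<and> t = i)")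
      case True2: True
      have "tstep i j (\<phi> k) ?w (offd n (Aseq k)) r t = 0" unfolding tstep_def using True2 by auto
      moreover have "offd n (Aseq (Suc k)) r t = 0" using True2 z z2 unfolding offd_def by auto
      ultimately show ?thesis by simp
    next
      case F2: False
      have "offd n (Aseq (Suc k)) r t = Aseq (Suc k) r t" using True F2 by (simp add: offd_def)
      also have "\<dots> = conjr i j (\<phi> k) ?w (Aseq k) r t"
        using mmul_conj_rot[OF ij(3) ij(1,2)] True step by simp
      also have "\<dots> = conjr i j (\<phi> k) ?w (offd n (Aseq k)) r t"
        by (rule conjr_offd) (use True F2 ij in auto)
      finally show ?thesis unfolding tstep_def using F2 by auto
    qed
  qed
  then show ?case using Suc by (auto simp: i_def j_def)
qed

lemma nth_concat_replicate:
  "k < m * length xs \<Longrightarrow> concat (replicate m xs) ! k = xs ! (k mod length xs)"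
proof (induction m arbitrary: k)
  case 0 then show ?case by simp
next
  case (Suc m)
  show ?case
  proof (cases "k < length xs")
    case True then show ?thesis by (simp add: nth_append)
  next
    case False
    then have "k - length xs < m * length xs" using Suc.prems by simp
    then have "concat (replicate m xs) ! (k - length xs) = xs ! ((k - length xs) mod length xs)" using Suc.IH by blast
    moreover have "(k - length xs) mod length xs = k mod length xs" using False by (simp add: le_mod_geq)
    ultimately show ?thesis using False by (simp add: nth_append)
  qed
qed

lemma goodrep_periodic:
  assumes "goodrep n m Ord"
  shows "goodP n (\<lambda>k. Ord ! (k mod length Ord)) (m * length Ord)"
proof -
  have "goodP n (nth (concat (replicate m Ord))) (m * length Ord)"
    using assms by (simp add: goodrep_def goodL_def length_concat sum_list_replicate)
  then show ?thesis by (rule goodP_cong[rotated]) (simp add: nth_concat_replicate)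
qed

lemma validP_periodic:
  "set Ord \<subseteq> pairs n \<Longrightarrow> Ord \<noteq> [] \<Longrightarrow> validP n (\<lambda>k. Ord ! (k mod length Ord)) M"
  unfolding validP_def by (metis length_greater_0_conv mod_less_divisor nth_mem subsetD)

theorem corollary3p7:
  fixes n :: nat
  assumes "n \<ge> 2"
  shows "\<exists>\<gamma>::real. 0 \<le> \<gamma> \<and> \<gamma> < 1 \<and>
    (\<forall>(A::cmatrix) Ord Ord' Ord'' (d::nat) Aseq \<phi> \<alpha>.
       hermitian n A \<longrightarrow> is_ordering n Ord \<longrightarrow> Ord'' \<in> C_sp n \<longrightarrow>
       ((perm_equiv n Ord Ord' \<and> canon_chain d Ord' Ord'') \<or>
        (canon_chain d Ord Ord' \<and> perm_equiv n Ord' Ord'')) \<longrightarrow>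
       jacobi_run n Ord A Aseq \<phi> \<alpha> \<longrightarrow>
       (\<forall>k. - (pi / 4) \<le> \<phi> k \<and> \<phi> k \<le> pi / 4) \<longrightarrow>
       (offS n (Aseq ((d + 1) * length Ord)))\<^sup>2 \<le> \<gamma> * (offS n A)\<^sup>2)"
proof -
  define Q where "Q = (\<lambda>Ord d. \<exists>Ord' Ord''. Ord'' \<in> C_sp n \<and>
       ((perm_equiv n Ord Ord' \<and> canon_chain d Ord' Ord'') \<or>
        (canon_chain d Ord Ord' \<and> perm_equiv n Ord' Ord'')))"
  define OK where "OK = {Ord. is_ordering n Ord \<and> (\<exists>d. Q Ord d)}"
  define dm where "dm = (\<lambda>Ord. LEAST d. Q Ord d)"
  define PP :: "(nat \<times> nat) list \<Rightarrow> nat \<Rightarrow> nat \<times> nat" where "PP = (\<lambda>Ord k. Ord ! (k mod length Ord))"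
  have finP: "finite (pairs n)"
    by (rule finite_subset[of _ "{1..n} \<times> {1..n}"]) (auto simp: pairs_def)
  have p12: "(1, 2) \<in> pairs n" using assms by (simp add: pairs_def)
  have finOK: "finite OK"
    by (rule finite_subset[OF _ finite_subset_distinct[OF finP]]) (auto simp: OK_def is_ordering_def)
  have ex: "\<forall>Ord\<in>OK. \<exists>\<gamma>. 0 \<le> \<gamma> \<and> \<gamma> < 1 \<and> (\<forall>X \<phi> w. zo n X \<longrightarrow> zd X \<longrightarrow> okang \<phi> w \<longrightarrow>
     S2 n (tev (PP Ord) \<phi> w X (Suc (dm Ord) * length Ord)) \<le> \<gamma> * S2 n X)"
  proof
    fix Ord assume o: "Ord \<in> OK"
    then have io: "is_ordering n Ord" and q: "\<exists>d. Q Ord d" by (auto simp: OK_def)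
    have "Q Ord (dm Ord)" unfolding dm_def using q by (rule LeastI_ex)
    then obtain Ord' Ord'' where "Ord'' \<in> C_sp n" "(perm_equiv n Ord Ord' \<and> canon_chain (dm Ord) Ord' Ord'') \<or>
        (canon_chain (dm Ord) Ord Ord' \<and> perm_equiv n Ord' Ord'')" by (auto simp: Q_def)
    then have "goodrep n (Suc (dm Ord)) Ord" using main_good[OF io] by blast
    then have g: "goodP n (PP Ord) (Suc (dm Ord) * length Ord)" unfolding PP_def by (rule goodrep_periodic)
    have sO: "set Ord = pairs n" using io by (simp add: is_ordering_def)
    then have "Ord \<noteq> []" using p12 by auto
    then have v: "validP n (PP Ord) (Suc (dm Ord) * length Ord)" unfolding PP_def using sO validP_periodic by simp
    show "\<exists>\<gamma>. 0 \<le> \<gamma> \<and> \<gamma> < 1 \<and> (\<forall>X \<phi> w. zo n X \<longrightarrow> zd X \<longrightarrow> okang \<phi> w \<longrightarrow>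
     S2 n (tev (PP Ord) \<phi> w X (Suc (dm Ord) * length Ord)) \<le> \<gamma> * S2 n X)"
      by (rule compact_bound[OF g v])
  qed
  obtain G where G: "\<forall>Ord\<in>OK. 0 \<le> G Ord \<and> G Ord < 1 \<and> (\<forall>X \<phi> w. zo n X \<longrightarrow> zd X \<longrightarrow> okang \<phi> w \<longrightarrow>
     S2 n (tev (PP Ord) \<phi> w X (Suc (dm Ord) * length Ord)) \<le> G Ord * S2 n X)"
    using bchoice[OF ex] by blast
  define \<gamma> where "\<gamma> = Max (insert 0 (G ` OK))"
  have fin: "finite (insert 0 (G ` OK))" using finOK by simp
  have g0: "0 \<le> \<gamma>" unfolding \<gamma>_def using fin by (intro Max_ge) auto
  have gG: "G Ord \<le> \<gamma>" if "Ord \<in> OK" for Ord unfolding \<gamma>_def using fin that by (intro Max_ge) auto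
  have g1: "\<gamma> < 1"
  proof -
    have "\<gamma> \<in> insert 0 (G ` OK)" unfolding \<gamma>_def using fin by (intro Max_in) auto
    then show ?thesis using G by auto
  qed
  have main: "(offS n (Aseq ((d + 1) * length Ord)))\<^sup>2 \<le> \<gamma> * (offS n A)\<^sup>2"
    if h: "hermitian n A" and io: "is_ordering n Ord" and sp: "Ord'' \<in> C_sp n"
      and ch: "(perm_equiv n Ord Ord' \<and> canon_chain d Ord' Ord'') \<or> (canon_chain d Ord Ord' \<and> perm_equiv n Ord' Ord'')"
      and run: "jacobi_run n Ord A Aseq \<phi> \<alpha>"
      and ang: "\<forall>k. - (pi / 4) \<le> \<phi> k \<and> \<phi> k \<le> pi / 4"
    for A Ord Ord' Ord'' d Aseq \<phi> \<alpha>
  proof -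
    have qd: "Q Ord d" using sp ch by (auto simp: Q_def)
    then have o: "Ord \<in> OK" using io by (auto simp: OK_def)
    have dle: "dm Ord \<le> d" unfolding dm_def using qd by (rule Least_le)
    have sO: "set Ord = pairs n" using io by (simp add: is_ordering_def)
    then have ne: "Ord \<noteq> []" using p12 by auto
    define w where "w = (\<lambda>k. exp (\<i> * complex_of_real (\<alpha> k)))"
    have "\<bar>\<phi> k\<bar> \<le> pi / 4" for k
    proof -
      have a: "- (pi / 4) \<le> \<phi> k" "\<phi> k \<le> pi / 4" using ang by auto
      show ?thesis unfolding abs_le_iff using a by linarith
    qed
    then have ok: "okang \<phi> w" unfolding okang_def w_def by simp
    define K where "K = (d + 1) * length Ord"
    define K0 where "K0 = Suc (dm Ord) * length Ord"
    have v: "validP n (PP Ord) K" unfolding PP_def using sO ne validP_periodic by simp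
    have "(offS n (Aseq K))\<^sup>2 = S2 n (offd n (Aseq K))" by (simp add: S2_offd)
    also have "\<dots> = S2 n (tev (PP Ord) \<phi> w (offd n A) K)"
      using run_offd[OF run h _ ne, of K] sO by (simp add: PP_def w_def)
    also have "\<dots> \<le> S2 n (tev (PP Ord) \<phi> w (offd n A) K0)"
      using dle by (intro S2_tev_mono[OF v ok zd_offd]) (simp add: K_def K0_def)
    also have "\<dots> \<le> G Ord * S2 n (offd n A)" using G o zo_offd zd_offd ok unfolding K0_def by blast
    also have "\<dots> \<le> \<gamma> * S2 n (offd n A)" using gG[OF o] S2_nonneg by (intro mult_right_mono) auto
    also have "\<dots> = \<gamma> * (offS n A)\<^sup>2" by (simp add: S2_offd)
    finally show ?thesis by (simp add: K_def)
  qed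
  show ?thesis using g0 g1 main by blast
qed

end
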